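(* Let $(M,g)$ be a semi-regular spacetime. Then its Einstein density tensor of weight $2$, $G\det g$, is smooth: in any local coordinate chart, the functions $G_{ab}\det g$ (and $G^{ab}\det g$), defined at the points where $g$ is nondegenerate, agree there with smooth functions on the whole chart domain.
   Context: A singular semi-Riemannian manifold $(M,g)$ is a smooth manifold $M$ with a smooth symmetric bilinear form $g$ on $TM$, possibly degenerate and with variable signature. For $u\in T_pM$ let $u^\flat(v)=g(u,v)$; $T^\bullet_pM=\{u^\flat:u\in T_pM\}$, with nondegenerate inner product $\langle\langle u^\flat,v^\flat\rangle\rangle:=g(u,v)$; $\mathcal A^\bullet(M)$ is the set of smooth $1$-forms with values in $T^\bullet_pM$ at each $p$. The Koszul form is $\mathcal K(X,Y,Z)=\tfrac12\{Xg(Y,Z)+Yg(Z,X)-Zg(X,Y)-g(X,[Y,Z])+g(Y,[Z,X])+g(Z,[X,Y])\}$, $\nabla^\flat_XY:=\mathcal K(X,Y,\cdot)$. If $\nabla^\flat_XY\in\mathcal A^\bullet(M)$ for all smooth vector fields $X,Y$, then for $\omega\in\mathcal A^\bullet(M)$ define $(\nabla_X\omega)(Y)=X(\omega(Y))-\langle\langle\nabla^\flat_XY,\omega\rangle\rangle$. $(M,g)$ is semi-regular if for all smooth vector fields $X,Y,Z$ one has $\nabla^\flat_XY\in\mathcal A^\bullet(M)$ and $\nabla_Z(\nabla^\flat_XY)\in\mathcal A^\bullet(M)$ (in particular smooth). A semi-regular spacetime is a $4$-dimensional semi-regular singular semi-Riemannian manifold whose metric has signature with $3$ positive and $1$ negative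 eigenvalue at the points where it is nondegenerate. At points where $g$ is nondegenerate, $G=\mathrm{Ric}-\tfrac12 s g$ is the usual Einstein tensor of $g$ (Ricci tensor $\mathrm{Ric}$, scalar curvature $s$), and $\det g$ is the determinant of the component matrix of $g$ in the chart. *)

theory Defs
  imports "HOL-Analysis.Analysis"
begin

text \<open>Local (chart) rendering: points of the chart domain are in real^4,
  a metric is a matrix field g p $ a $ b, vector fields and covector fields
  are given by their component functions U -> real^4.\<close>

type_synonym pt = "real^4"

definition partial :: "4 \<Rightarrow> (pt \<Rightarrow> real) \<Rightarrow> pt \<Rightarrow> real" where
  "partial i f x = deriv (\<lambda>t. f (x + t *\<^sub>R axis i 1)) 0"

fun Ck_on :: "nat \<Rightarrow> pt set \<Rightarrow> (pt \<Rightarrow> real) \<Rightarrow> bool" where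
  "Ck_on 0 U f = continuous_on U f"
| "Ck_on (Suc k) U f =
     ((\<forall>x\<in>U. \<forall>i. (\<lambda>t. f (x + t *\<^sub>R axis i 1)) differentiable (at 0))
      \<and> (\<forall>i. Ck_on k U (partial i f)))"

definition smooth_on :: "pt set \<Rightarrow> (pt \<Rightarrow> real) \<Rightarrow> bool" where
  "smooth_on U f \<longleftrightarrow> (\<forall>k. Ck_on k U f)"

definition smooth_field :: "pt set \<Rightarrow> (pt \<Rightarrow> real^4) \<Rightarrow> bool" where
  "smooth_field U X \<longleftrightarrow> (\<forall>k. smooth_on U (\<lambda>p. X p $ k))"

type_synonym metric = "pt \<Rightarrow> real^4^4"

definition gval :: "metric \<Rightarrow> pt \<Rightarrow> real^4 \<Rightarrow> real^4 \<Rightarrow> real" where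
  "gval g p u v = (\<Sum>a\<in>UNIV. \<Sum>b\<in>UNIV. g p $ a $ b * u $ a * v $ b)"

definition flat :: "metric \<Rightarrow> pt \<Rightarrow> real^4 \<Rightarrow> real^4" where
  "flat g p u = (\<chi> b. \<Sum>a\<in>UNIV. u $ a * g p $ a $ b)"

definition Tbullet :: "metric \<Rightarrow> pt \<Rightarrow> (real^4) set" where
  "Tbullet g p = range (flat g p)"

definition innerb :: "metric \<Rightarrow> pt \<Rightarrow> real^4 \<Rightarrow> real^4 \<Rightarrow> real" where
  "innerb g p \<alpha> \<beta> = gval g p (SOME u. flat g p u = \<alpha>) (SOME v. flat g p v = \<beta>)"

definition dir :: "(pt \<Rightarrow> real^4) \<Rightarrow> (pt \<Rightarrow> real) \<Rightarrow> pt \<Rightarrow> real" where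
  "dir X f p = (\<Sum>j\<in>UNIV. X p $ j * partial j f p)"

definition lie :: "(pt \<Rightarrow> real^4) \<Rightarrow> (pt \<Rightarrow> real^4) \<Rightarrow> pt \<Rightarrow> real^4" where
  "lie X Y p = (\<chi> k. dir X (\<lambda>q. Y q $ k) p - dir Y (\<lambda>q. X q $ k) p)"

definition koszul :: "metric \<Rightarrow> (pt \<Rightarrow> real^4) \<Rightarrow> (pt \<Rightarrow> real^4) \<Rightarrow> (pt \<Rightarrow> real^4) \<Rightarrow> pt \<Rightarrow> real" where
  "koszul g X Y Z p = 1/2 * (dir X (\<lambda>q. gval g q (Y q) (Z q)) p
      + dir Y (\<lambda>q. gval g q (Z q) (X q)) p
      - dir Z (\<lambda>q. gval g q (X q) (Y q)) p
      - gval g p (X p) (lie Y Z p)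
      + gval g p (Y p) (lie Z X p)
      + gval g p (Z p) (lie X Y p))"

definition coord_field :: "4 \<Rightarrow> pt \<Rightarrow> real^4" where
  "coord_field j = (\<lambda>q. axis j 1)"

definition nabla_flat :: "metric \<Rightarrow> (pt \<Rightarrow> real^4) \<Rightarrow> (pt \<Rightarrow> real^4) \<Rightarrow> pt \<Rightarrow> real^4" where
  "nabla_flat g X Y p = (\<chi> j. koszul g X Y (coord_field j) p)"

text \<open>(nabla_Z omega)(Y) = Z(omega(Y)) - <<nabla^flat_Z Y, omega>>, components on coordinate fields.\<close>
definition cov_deriv :: "metric \<Rightarrow> (pt \<Rightarrow> real^4) \<Rightarrow> (pt \<Rightarrow> real^4) \<Rightarrow> pt \<Rightarrow> real^4" where
  "cov_deriv g Z \<omega> p = (\<chi> j. dir Z (\<lambda>q. \<omega> q $ j) p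
       - innerb g p (nabla_flat g Z (coord_field j) p) (\<omega> p))"

definition in_Abullet :: "metric \<Rightarrow> pt set \<Rightarrow> (pt \<Rightarrow> real^4) \<Rightarrow> bool" where
  "in_Abullet g U \<omega> \<longleftrightarrow> smooth_field U \<omega> \<and> (\<forall>p\<in>U. \<omega> p \<in> Tbullet g p)"

definition semi_regular :: "metric \<Rightarrow> pt set \<Rightarrow> bool" where
  "semi_regular g U \<longleftrightarrow>
    (\<forall>X Y Z. smooth_field U X \<and> smooth_field U Y \<and> smooth_field U Z \<longrightarrow>
       in_Abullet g U (nabla_flat g X Y) \<and>
       in_Abullet g U (cov_deriv g Z (nabla_flat g X Y)))"

definition singular_semi_riemannian :: "metric \<Rightarrow> pt set \<Rightarrow> bool" where
  "singular_semi_riemannian g U \<longleftrightarrow> open U \<and>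
     (\<forall>a b. smooth_on U (\<lambda>p. g p $ a $ b)) \<and>
     (\<forall>p\<in>U. \<forall>a b. g p $ a $ b = g p $ b $ a)"

text \<open>Lorentzian signature (3 positive, 1 negative eigenvalue, with multiplicity)
  at nondegenerate points.\<close>
definition lorentz_where_nondeg :: "metric \<Rightarrow> pt set \<Rightarrow> bool" where
  "lorentz_where_nondeg g U \<longleftrightarrow> (\<forall>p\<in>U. det (g p) \<noteq> 0 \<longrightarrow>
     (\<exists>ev::real^4. ev $ 1 < 0 \<and> ev $ 2 > 0 \<and> ev $ 3 > 0 \<and> ev $ 4 > 0 \<and>
        (\<forall>x. det (g p - x *\<^sub>R mat 1) = (\<Prod>i\<in>UNIV. ev $ i - x))))"

definition semi_regular_spacetime :: "metric \<Rightarrow> pt set \<Rightarrow> bool" where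
  "semi_regular_spacetime g U \<longleftrightarrow>
     singular_semi_riemannian g U \<and> semi_regular g U \<and> lorentz_where_nondeg g U"

definition ginv :: "metric \<Rightarrow> pt \<Rightarrow> real^4^4" where
  "ginv g p = matrix_inv (g p)"

definition christoffel :: "metric \<Rightarrow> pt \<Rightarrow> 4 \<Rightarrow> 4 \<Rightarrow> 4 \<Rightarrow> real" where
  "christoffel g p k i j = 1/2 * (\<Sum>l\<in>UNIV. ginv g p $ k $ l *
      (partial i (\<lambda>q. g q $ j $ l) p + partial j (\<lambda>q. g q $ i $ l) p
       - partial l (\<lambda>q. g q $ i $ j) p))"

definition riemann :: "metric \<Rightarrow> pt \<Rightarrow> 4 \<Rightarrow> 4 \<Rightarrow> 4 \<Rightarrow> 4 \<Rightarrow> real" where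
  "riemann g p r s m n =
     partial m (\<lambda>q. christoffel g q r n s) p - partial n (\<lambda>q. christoffel g q r m s) p
     + (\<Sum>l\<in>UNIV. christoffel g p r m l * christoffel g p l n s
                 - christoffel g p r n l * christoffel g p l m s)"

definition ricci :: "metric \<Rightarrow> pt \<Rightarrow> 4 \<Rightarrow> 4 \<Rightarrow> real" where
  "ricci g p s n = (\<Sum>r\<in>UNIV. riemann g p r s r n)"

definition scalar_curv :: "metric \<Rightarrow> pt \<Rightarrow> real" where
  "scalar_curv g p = (\<Sum>s\<in>UNIV. \<Sum>n\<in>UNIV. ginv g p $ s $ n * ricci g p s n)"

definition einstein :: "metric \<Rightarrow> pt \<Rightarrow> 4 \<Rightarrow> 4 \<Rightarrow> real" where
  "einstein g p a b = ricci g p a b - 1/2 * scalar_curv g p * g p $ a $ b"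

definition einstein_up :: "metric \<Rightarrow> pt \<Rightarrow> 4 \<Rightarrow> 4 \<Rightarrow> real" where
  "einstein_up g p a b =
     (\<Sum>c\<in>UNIV. \<Sum>d\<in>UNIV. ginv g p $ a $ c * ginv g p $ b $ d * einstein g p c d)"

end

theory Submission
  imports Defs
begin


definition ld :: "(pt \<Rightarrow> real) \<Rightarrow> pt \<Rightarrow> 4 \<Rightarrow> bool" where
  "ld f x i \<longleftrightarrow> (\<lambda>t. f (x + t *\<^sub>R axis i 1)) differentiable (at 0)"

lemma ld_deriv: "ld f x i \<Longrightarrow> ((\<lambda>t. f (x + t *\<^sub>R axis i 1)) has_real_derivative partial i f x) (at 0)"
  unfolding ld_def partial_def using DERIV_deriv_iff_real_differentiable by blast

lemma ev_line_in_open: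
  fixes x :: pt
  assumes "open U" "x \<in> U"
  shows "eventually (\<lambda>t::real. x + t *\<^sub>R axis i 1 \<in> U) (nhds 0)"
proof -
  obtain e where e: "e > 0" "ball x e \<subseteq> U" using assms openE by blast
  show ?thesis unfolding eventually_nhds_metric
    using e by (intro exI[of _ e]) (auto simp: dist_norm subset_iff)
qed

lemma ev_line_eq:
  fixes x :: pt
  assumes "open U" "x \<in> U" "\<forall>y\<in>U. f y = h y"
  shows "eventually (\<lambda>t::real. f (x + t *\<^sub>R axis i 1) = h (x + t *\<^sub>R axis i 1)) (nhds 0)"
  using ev_line_in_open[OF assms(1,2)] by eventually_elim (use assms(3) in auto)

lemma partial_cong:
  assumes "open U" "x \<in> U" "\<forall>y\<in>U. f y = h y"
  shows "partial i f x = partial i h x"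
  unfolding partial_def by (rule deriv_cong_ev[OF ev_line_eq[OF assms]]) simp

lemma ld_cong:
  assumes "open U" "x \<in> U" "\<forall>y\<in>U. f y = h y"
  shows "ld f x i \<longleftrightarrow> ld h x i"
proof -
  have "(\<lambda>t. f (x + t *\<^sub>R axis i 1)) differentiable (at 0) \<longleftrightarrow> (\<lambda>t. h (x + t *\<^sub>R axis i 1)) differentiable (at 0)"
    unfolding DERIV_deriv_iff_real_differentiable[symmetric]
    using DERIV_cong_ev[OF refl ev_line_eq[OF assms, of i]] deriv_cong_ev[OF ev_line_eq[OF assms, of i]]
    by metis
  thus ?thesis by (simp add: ld_def)
qed

lemma Ck_on_Suc_ld: "Ck_on (Suc k) U f = ((\<forall>x\<in>U. \<forall>i. ld f x i) \<and> (\<forall>i. Ck_on k U (partial i f)))"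
  by (simp add: ld_def)

declare Ck_on.simps(2)[simp del]

lemma Ck_cong:
  assumes "open U" "\<forall>y\<in>U. f y = h y"
  shows "Ck_on k U f = Ck_on k U h"
  using assms(2)
proof (induction k arbitrary: f h)
  case 0 thus ?case using continuous_on_cong by force
next
  case (Suc k)
  have p: "\<forall>y\<in>U. partial i f y = partial i h y" for i using partial_cong[OF assms(1)] Suc.prems by blast
  show ?case unfolding Ck_on_Suc_ld using Suc.IH[OF p] ld_cong[OF assms(1) _ Suc.prems] by blast
qed

lemma smooth_cong: "open U \<Longrightarrow> \<forall>y\<in>U. f y = h y \<Longrightarrow> smooth_on U f = smooth_on U h"
  unfolding smooth_on_def using Ck_cong by blast

lemma smooth_ld: "smooth_on U f \<Longrightarrow> x \<in> U \<Longrightarrow> ld f x i"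
  unfolding smooth_on_def using Ck_on_Suc_ld by blast

lemma smooth_partial: "smooth_on U f \<Longrightarrow> smooth_on U (partial i f)"
  unfolding smooth_on_def using Ck_on_Suc_ld by blast

lemma smooth_cont: "smooth_on U f \<Longrightarrow> continuous_on U f"
  unfolding smooth_on_def by (metis Ck_on.simps(1))

lemma partial_add:
  assumes "ld f x i" "ld h x i"
  shows "partial i (\<lambda>y. f y + h y) x = partial i f x + partial i h x"
  using DERIV_add[OF ld_deriv[OF assms(1)] ld_deriv[OF assms(2)]] unfolding partial_def
  by (simp add: DERIV_imp_deriv)

lemma ld_add: "ld f x i \<Longrightarrow> ld h x i \<Longrightarrow> ld (\<lambda>y. f y + h y) x i"
  unfolding ld_def by (rule differentiable_add)

lemma partial_mult:
  assumes "ld f x i" "ld h x i"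
  shows "partial i (\<lambda>y. f y * h y) x = partial i f x * h x + f x * partial i h x"
  using DERIV_mult[OF ld_deriv[OF assms(1)] ld_deriv[OF assms(2)]] unfolding partial_def
  by (simp add: DERIV_imp_deriv)

lemma ld_mult: "ld f x i \<Longrightarrow> ld h x i \<Longrightarrow> ld (\<lambda>y. f y * h y) x i"
  unfolding ld_def by (rule differentiable_mult)

lemma partial_const: "partial i (\<lambda>y. c) x = 0"
  unfolding partial_def by simp

lemma ld_const: "ld (\<lambda>y. c) x i"
  unfolding ld_def by simp

lemma Ck_add:
  assumes "open U"
  shows "Ck_on k U f \<Longrightarrow> Ck_on k U h \<Longrightarrow> Ck_on k U (\<lambda>y. f y + h y)"
proof (induction k arbitrary: f h)
  case 0 thus ?case by (simp add: continuous_on_add)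
next
  case (Suc k)
  have p: "\<forall>y\<in>U. partial i (\<lambda>y. f y + h y) y = partial i f y + partial i h y" for i
    using Suc.prems partial_add unfolding Ck_on_Suc_ld by blast
  have "Ck_on k U (\<lambda>y. partial i f y + partial i h y)" for i
    using Suc.prems Suc.IH unfolding Ck_on_Suc_ld by blast
  hence "Ck_on k U (partial i (\<lambda>y. f y + h y))" for i using Ck_cong[OF assms p] by blast
  moreover have "\<forall>x\<in>U. \<forall>i. ld (\<lambda>y. f y + h y) x i"
    using Suc.prems ld_add unfolding Ck_on_Suc_ld by blast
  ultimately show ?case unfolding Ck_on_Suc_ld by blast
qed

lemma smooth_add: "open U \<Longrightarrow> smooth_on U f \<Longrightarrow> smooth_on U h \<Longrightarrow> smooth_on U (\<lambda>y. f y + h y)"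
  unfolding smooth_on_def using Ck_add by blast

lemma Ck_const: "Ck_on k U (\<lambda>y. c)"
proof (induction k arbitrary: c)
  case 0 thus ?case by simp
next
  case (Suc k)
  have "partial i (\<lambda>y. c) = (\<lambda>y. 0)" for i by (simp add: partial_const fun_eq_iff)
  thus ?case unfolding Ck_on_Suc_ld using Suc ld_const by auto
qed

lemma smooth_const: "smooth_on U (\<lambda>y. c)"
  unfolding smooth_on_def using Ck_const by blast

lemma smooth_mult: "open U \<Longrightarrow> smooth_on U f \<Longrightarrow> smooth_on U h \<Longrightarrow> smooth_on U (\<lambda>y. f y * h y)"
proof -
  assume U: "open U"
  have "\<And>f h. smooth_on U f \<Longrightarrow> smooth_on U h \<Longrightarrow> Ck_on k U (\<lambda>y. f y * h y)" for k
  proof (induction k)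
    case 0 thus ?case using smooth_cont by (simp add: continuous_on_mult)
  next
    case (Suc k)
    have p: "\<forall>y\<in>U. partial i (\<lambda>y. f y * h y) y = partial i f y * h y + f y * partial i h y" for i
      using Suc.prems partial_mult smooth_ld by blast
    have "Ck_on k U (\<lambda>y. partial i f y * h y + f y * partial i h y)" for i
      by (rule Ck_add[OF U]) (use Suc.IH Suc.prems smooth_partial in blast)+
    hence "Ck_on k U (partial i (\<lambda>y. f y * h y))" for i using Ck_cong[OF U p] by blast
    moreover have "\<forall>x\<in>U. \<forall>i. ld (\<lambda>y. f y * h y) x i"
      using Suc.prems ld_mult smooth_ld by blast
    ultimately show ?case unfolding Ck_on_Suc_ld by blast
  qed
  thus "smooth_on U f \<Longrightarrow> smooth_on U h \<Longrightarrow> smooth_on U (\<lambda>y. f y * h y)"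
    unfolding smooth_on_def by blast
qed

lemma smooth_sum: "open U \<Longrightarrow> (\<And>a. a \<in> A \<Longrightarrow> smooth_on U (f a)) \<Longrightarrow> smooth_on U (\<lambda>y. \<Sum>a\<in>A. f a y)"
proof (induction A rule: infinite_finite_induct)
  case (infinite A) thus ?case by (simp add: smooth_const)
next
  case empty thus ?case by (simp add: smooth_const)
next
  case (insert a A)
  have "smooth_on U (\<lambda>y. f a y + (\<Sum>a\<in>A. f a y))"
    using insert by (intro smooth_add) auto
  thus ?case using insert(1,2) by simp
qed

lemma smooth_cmult: "open U \<Longrightarrow> smooth_on U f \<Longrightarrow> smooth_on U (\<lambda>y. c * f y)"
  using smooth_mult[OF _ smooth_const] by blast

lemma smooth_minus: "open U \<Longrightarrow> smooth_on U f \<Longrightarrow> smooth_on U (\<lambda>y. - f y)"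
  using smooth_cmult[of U f "-1"] by simp

lemma smooth_diff: "open U \<Longrightarrow> smooth_on U f \<Longrightarrow> smooth_on U h \<Longrightarrow> smooth_on U (\<lambda>y. f y - h y)"
proof -
  assume a: "open U" "smooth_on U f" "smooth_on U h"
  have "smooth_on U (\<lambda>y. f y + - h y)" using a smooth_add smooth_minus by blast
  thus ?thesis by simp
qed


lemma line_deriv:
  fixes z :: pt
  assumes "smooth_on U h" "z + t *\<^sub>R axis i 1 \<in> U"
  shows "((\<lambda>u. h (z + u *\<^sub>R axis i 1)) has_real_derivative partial i h (z + t *\<^sub>R axis i 1)) (at t)"
proof -
  have d: "((\<lambda>u. h ((z + t *\<^sub>R axis i 1) + u *\<^sub>R axis i 1)) has_real_derivative partial i h (z + t *\<^sub>R axis i 1)) (at 0)"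
    using ld_deriv[OF smooth_ld[OF assms]] .
  have e: "(\<lambda>u. h ((z + t *\<^sub>R axis i 1) + u *\<^sub>R axis i 1)) = (\<lambda>u. (\<lambda>u. h (z + u *\<^sub>R axis i 1)) (u + t))"
    by (simp add: algebra_simps scaleR_add_left)
  have "((\<lambda>u. h (z + u *\<^sub>R axis i 1)) has_real_derivative partial i h (z + t *\<^sub>R axis i 1)) (at (0 + t))"
    using d unfolding e by (subst DERIV_shift) simp
  thus ?thesis by simp
qed

lemma mvt_line:
  fixes z :: pt
  assumes "smooth_on U h" "s > 0" "\<And>t. 0 \<le> t \<Longrightarrow> t \<le> s \<Longrightarrow> z + t *\<^sub>R axis i 1 \<in> U"
  shows "\<exists>\<sigma>>0. \<sigma> < s \<and> h (z + s *\<^sub>R axis i 1) - h z = s * partial i h (z + \<sigma> *\<^sub>R axis i 1)"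
proof -
  have "\<And>t. 0 \<le> t \<Longrightarrow> t \<le> s \<Longrightarrow> ((\<lambda>u. h (z + u *\<^sub>R axis i 1)) has_real_derivative partial i h (z + t *\<^sub>R axis i 1)) (at t)"
    using line_deriv[OF assms(1)] assms(3) by blast
  from MVT2[OF assms(2) this] show ?thesis by auto
qed

lemma rect_mvt:
  fixes x :: pt
  assumes U: "open U" and f: "smooth_on U f" and s: "s > 0"
    and inU: "\<And>a b. \<bar>a\<bar> \<le> s \<Longrightarrow> \<bar>b\<bar> \<le> s \<Longrightarrow> x + a *\<^sub>R axis i 1 + b *\<^sub>R axis j 1 \<in> U"
  shows "\<exists>\<sigma> \<tau>. 0 < \<sigma> \<and> \<sigma> < s \<and> 0 < \<tau> \<and> \<tau> < s \<and>
     f (x + s *\<^sub>R axis i 1 + s *\<^sub>R axis j 1) - f (x + s *\<^sub>R axis i 1) - f (x + s *\<^sub>R axis j 1) + f x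
       = s * s * partial j (partial i f) (x + \<sigma> *\<^sub>R axis i 1 + \<tau> *\<^sub>R axis j 1)"
proof -
  define e where "e = (axis i 1 :: pt)"
  define d where "d = (axis j 1 :: pt)"
  have inU': "\<And>a b. \<bar>a\<bar> \<le> s \<Longrightarrow> \<bar>b\<bar> \<le> s \<Longrightarrow> x + a *\<^sub>R e + b *\<^sub>R d \<in> U"
    using inU unfolding e_def d_def by blast
  define \<phi> where "\<phi> t = f ((x + s *\<^sub>R d) + t *\<^sub>R e) - f (x + t *\<^sub>R e)" for t
  have "\<And>t. 0 \<le> t \<Longrightarrow> t \<le> s \<Longrightarrow> (\<phi> has_real_derivative
      (partial i f ((x + s *\<^sub>R d) + t *\<^sub>R e) - partial i f (x + t *\<^sub>R e))) (at t)"
  proof -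
    fix t assume t0: "0 \<le> t" "t \<le> s"
    hence t: "0 \<le> t \<and> t \<le> s" by simp
    have a: "(x + s *\<^sub>R d) + t *\<^sub>R e \<in> U" using inU'[of t s] t s by (simp add: algebra_simps)
    have b: "x + t *\<^sub>R e \<in> U" using inU'[of t 0] t s by simp
    show "(\<phi> has_real_derivative (partial i f ((x + s *\<^sub>R d) + t *\<^sub>R e) - partial i f (x + t *\<^sub>R e))) (at t)"
      unfolding \<phi>_def e_def
      by (intro DERIV_diff line_deriv[OF f]) (use a b in \<open>auto simp: e_def\<close>)
  qed
  from MVT2[OF s this] obtain \<sigma> where \<sigma>: "0 < \<sigma>" "\<sigma> < s"
    "\<phi> s - \<phi> 0 = (s - 0) * (partial i f ((x + s *\<^sub>R d) + \<sigma> *\<^sub>R e) - partial i f (x + \<sigma> *\<^sub>R e))"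
    by auto
  have "\<exists>\<tau>>0. \<tau> < s \<and> partial i f ((x + \<sigma> *\<^sub>R e) + s *\<^sub>R d) - partial i f (x + \<sigma> *\<^sub>R e)
      = s * partial j (partial i f) ((x + \<sigma> *\<^sub>R e) + \<tau> *\<^sub>R d)"
    unfolding d_def
    by (rule mvt_line[OF smooth_partial[OF f] s]) (use inU' \<sigma> in \<open>auto simp: d_def\<close>)
  then obtain \<tau> where \<tau>: "0 < \<tau>" "\<tau> < s" "partial i f ((x + \<sigma> *\<^sub>R e) + s *\<^sub>R d) - partial i f (x + \<sigma> *\<^sub>R e)
      = s * partial j (partial i f) ((x + \<sigma> *\<^sub>R e) + \<tau> *\<^sub>R d)" by blast
  have e1: "(x + s *\<^sub>R d) + \<sigma> *\<^sub>R e = (x + \<sigma> *\<^sub>R e) + s *\<^sub>R d" by (simp add: algebra_simps)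
  have "f (x + s *\<^sub>R e + s *\<^sub>R d) - f (x + s *\<^sub>R e) - f (x + s *\<^sub>R d) + f x = \<phi> s - \<phi> 0"
    unfolding \<phi>_def by (simp add: algebra_simps)
  also have "\<dots> = s * s * partial j (partial i f) (x + \<sigma> *\<^sub>R e + \<tau> *\<^sub>R d)"
    using \<sigma>(3) \<tau>(3) e1 by simp
  finally show ?thesis using \<sigma> \<tau> unfolding e_def d_def by blast
qed

lemma schwarz:
  fixes x :: pt
  assumes U: "open U" and f: "smooth_on U f" and x: "x \<in> U"
  shows "partial j (partial i f) x = partial i (partial j f) x"
proof (rule ccontr)
  define A where "A = partial j (partial i f)"
  define B where "B = partial i (partial j f)"
  assume ne: "partial j (partial i f) x \<noteq> partial i (partial j f) x"
  define \<epsilon> where "\<epsilon> = \<bar>A x - B x\<bar> / 2"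
  have \<epsilon>: "\<epsilon> > 0" using ne unfolding \<epsilon>_def A_def B_def by simp
  have cA: "isCont A x" unfolding A_def using smooth_cont[OF smooth_partial[OF smooth_partial[OF f]]] U x
    by (simp add: continuous_on_eq_continuous_at)
  have cB: "isCont B x" unfolding B_def using smooth_cont[OF smooth_partial[OF smooth_partial[OF f]]] U x
    by (simp add: continuous_on_eq_continuous_at)
  obtain dA where dA: "dA > 0" "\<And>y. dist y x < dA \<Longrightarrow> dist (A y) (A x) < \<epsilon>"
    using cA \<epsilon> unfolding continuous_at_eps_delta by blast
  obtain dB where dB: "dB > 0" "\<And>y. dist y x < dB \<Longrightarrow> dist (B y) (B x) < \<epsilon>"
    using cB \<epsilon> unfolding continuous_at_eps_delta by blast
  obtain r where r: "r > 0" "ball x r \<subseteq> U" using U x openE by blast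
  define s where "s = min (min dA dB) r / 3"
  have s: "s > 0" "2 * s < dA" "2 * s < dB" "2 * s < r" using dA dB r unfolding s_def by auto
  have nrm: "norm (a *\<^sub>R axis k 1 + b *\<^sub>R axis l 1 :: pt) \<le> 2 * s" if "\<bar>a\<bar> \<le> s" "\<bar>b\<bar> \<le> s" for a b k l
  proof -
    have "norm (a *\<^sub>R axis k 1 + b *\<^sub>R axis l 1 :: pt) \<le> norm (a *\<^sub>R axis k 1 :: pt) + norm (b *\<^sub>R axis l 1 :: pt)"
      by (rule norm_triangle_ineq)
    also have "\<dots> = \<bar>a\<bar> + \<bar>b\<bar>" by simp
    finally show ?thesis using that by simp
  qed
  have inU: "x + a *\<^sub>R axis k 1 + b *\<^sub>R axis l 1 \<in> U" if "\<bar>a\<bar> \<le> s" "\<bar>b\<bar> \<le> s" for a b k l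
  proof -
    have "dist (x + a *\<^sub>R axis k 1 + b *\<^sub>R axis l 1) x < r"
      using nrm[OF that, of k l] s by (simp add: dist_norm add.assoc)
    thus ?thesis using r by (auto simp: dist_commute)
  qed
  obtain \<sigma>1 \<tau>1 where 1: "0 < \<sigma>1" "\<sigma>1 < s" "0 < \<tau>1" "\<tau>1 < s"
     "f (x + s *\<^sub>R axis i 1 + s *\<^sub>R axis j 1) - f (x + s *\<^sub>R axis i 1) - f (x + s *\<^sub>R axis j 1) + f x
       = s * s * A (x + \<sigma>1 *\<^sub>R axis i 1 + \<tau>1 *\<^sub>R axis j 1)"
    using rect_mvt[OF U f s(1) inU] unfolding A_def by blast
  obtain \<sigma>2 \<tau>2 where 2: "0 < \<sigma>2" "\<sigma>2 < s" "0 < \<tau>2" "\<tau>2 < s"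
     "f (x + s *\<^sub>R axis j 1 + s *\<^sub>R axis i 1) - f (x + s *\<^sub>R axis j 1) - f (x + s *\<^sub>R axis i 1) + f x
       = s * s * B (x + \<sigma>2 *\<^sub>R axis j 1 + \<tau>2 *\<^sub>R axis i 1)"
    using rect_mvt[OF U f s(1) inU] unfolding B_def by blast
  have "x + s *\<^sub>R axis j 1 + s *\<^sub>R axis i 1 = x + s *\<^sub>R axis i 1 + s *\<^sub>R axis j 1" by (simp add: algebra_simps)
  hence "s * s * A (x + \<sigma>1 *\<^sub>R axis i 1 + \<tau>1 *\<^sub>R axis j 1) = s * s * B (x + \<sigma>2 *\<^sub>R axis j 1 + \<tau>2 *\<^sub>R axis i 1)"
    using 1(5) 2(5) by (simp add: algebra_simps)
  hence eq: "A (x + \<sigma>1 *\<^sub>R axis i 1 + \<tau>1 *\<^sub>R axis j 1) = B (x + \<sigma>2 *\<^sub>R axis j 1 + \<tau>2 *\<^sub>R axis i 1)"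
    using s(1) by simp
  have "dist (x + \<sigma>1 *\<^sub>R axis i 1 + \<tau>1 *\<^sub>R axis j 1) x < dA"
    using nrm[of \<sigma>1 \<tau>1 i j] 1 s by (simp add: dist_norm add.assoc)
  hence a: "dist (A (x + \<sigma>1 *\<^sub>R axis i 1 + \<tau>1 *\<^sub>R axis j 1)) (A x) < \<epsilon>" by (rule dA(2))
  have "dist (x + \<sigma>2 *\<^sub>R axis j 1 + \<tau>2 *\<^sub>R axis i 1) x < dB"
    using nrm[of \<sigma>2 \<tau>2 j i] 2 s by (simp add: dist_norm add.assoc)
  hence b: "dist (B (x + \<sigma>2 *\<^sub>R axis j 1 + \<tau>2 *\<^sub>R axis i 1)) (B x) < \<epsilon>" by (rule dB(2))
  have aux: "\<And>P Q a b::real. \<bar>P - a\<bar> < \<bar>a - b\<bar> / 2 \<Longrightarrow> \<bar>Q - b\<bar> < \<bar>a - b\<bar> / 2 \<Longrightarrow> P = Q \<Longrightarrow> False"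
    by (auto simp: abs_if split: if_splits)
  from aux[OF a[unfolded \<epsilon>_def dist_real_def] b[unfolded \<epsilon>_def dist_real_def] eq] show False .
qed


definition ord4 :: "4 \<Rightarrow> real" where "ord4 x = (if x = 1 then 1 else if x = 2 then 2 else if x = 3 then 3 else 4)"
lemma ord4_simps[simp]: "ord4 1 = 1" "ord4 2 = 2" "ord4 3 = 3" "ord4 4 = 4" by (simp_all add: ord4_def)
definition eps :: "4 \<Rightarrow> 4 \<Rightarrow> 4 \<Rightarrow> 4 \<Rightarrow> real" where
 "eps i j k l = (ord4 j - ord4 i) * (ord4 k - ord4 i) * (ord4 l - ord4 i) * (ord4 k - ord4 j) * (ord4 l - ord4 j) * (ord4 l - ord4 k) / 12"

lemma det_4:
  "det (A::'a::comm_ring_1^4^4) =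
    A$1$1 * A$2$2 * A$3$3 * A$4$4 - A$1$1 * A$2$2 * A$3$4 * A$4$3
  - A$1$1 * A$2$3 * A$3$2 * A$4$4 + A$1$1 * A$2$3 * A$3$4 * A$4$2
  + A$1$1 * A$2$4 * A$3$2 * A$4$3 - A$1$1 * A$2$4 * A$3$3 * A$4$2
  - A$1$2 * A$2$1 * A$3$3 * A$4$4 + A$1$2 * A$2$1 * A$3$4 * A$4$3
  + A$1$2 * A$2$3 * A$3$1 * A$4$4 - A$1$2 * A$2$3 * A$3$4 * A$4$1
  - A$1$2 * A$2$4 * A$3$1 * A$4$3 + A$1$2 * A$2$4 * A$3$3 * A$4$1
  + A$1$3 * A$2$1 * A$3$2 * A$4$4 - A$1$3 * A$2$1 * A$3$4 * A$4$2
  - A$1$3 * A$2$2 * A$3$1 * A$4$4 + A$1$3 * A$2$2 * A$3$4 * A$4$1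
  + A$1$3 * A$2$4 * A$3$1 * A$4$2 - A$1$3 * A$2$4 * A$3$2 * A$4$1
  - A$1$4 * A$2$1 * A$3$2 * A$4$3 + A$1$4 * A$2$1 * A$3$3 * A$4$2
  + A$1$4 * A$2$2 * A$3$1 * A$4$3 - A$1$4 * A$2$2 * A$3$3 * A$4$1
  - A$1$4 * A$2$3 * A$3$1 * A$4$2 + A$1$4 * A$2$3 * A$3$2 * A$4$1"
proof -
  have f1: "finite {2::4, 3, 4}" "1 \<notin> {2::4, 3, 4}" by auto
  have f2: "finite {3::4, 4}" "2 \<notin> {3::4, 4}" by auto
  have f3: "finite {4::4}" "3 \<notin> {4::4}" by auto
  show ?thesis
    unfolding det_def UNIV_4
    unfolding sum_over_permutations_insert[OF f1]
    unfolding sum_over_permutations_insert[OF f2]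
    unfolding sum_over_permutations_insert[OF f3]
    unfolding permutes_sing
    by (simp add: sign_swap_id permutation_swap_id permutation_compose sign_compose sign_id swap_id_eq algebra_simps)
qed

lemma alpha_T:
  fixes M :: "real^4^4"
  shows "(\<Sum>i1\<in>UNIV. \<Sum>i2\<in>UNIV. \<Sum>i3\<in>UNIV. \<Sum>i4\<in>UNIV.
     eps i1 i2 i3 i4 * (M$i1$j1 * M$i2$j2 * M$i3$j3 * M$i4$j4)) =
    M$1$j1 * M$2$j2 * M$3$j3 * M$4$j4 - M$1$j1 * M$2$j2 * M$4$j3 * M$3$j4
  - M$1$j1 * M$3$j2 * M$2$j3 * M$4$j4 + M$1$j1 * M$3$j2 * M$4$j3 * M$2$j4
  + M$1$j1 * M$4$j2 * M$2$j3 * M$3$j4 - M$1$j1 * M$4$j2 * M$3$j3 * M$2$j4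
  - M$2$j1 * M$1$j2 * M$3$j3 * M$4$j4 + M$2$j1 * M$1$j2 * M$4$j3 * M$3$j4
  + M$2$j1 * M$3$j2 * M$1$j3 * M$4$j4 - M$2$j1 * M$3$j2 * M$4$j3 * M$1$j4
  - M$2$j1 * M$4$j2 * M$1$j3 * M$3$j4 + M$2$j1 * M$4$j2 * M$3$j3 * M$1$j4
  + M$3$j1 * M$1$j2 * M$2$j3 * M$4$j4 - M$3$j1 * M$1$j2 * M$4$j3 * M$2$j4
  - M$3$j1 * M$2$j2 * M$1$j3 * M$4$j4 + M$3$j1 * M$2$j2 * M$4$j3 * M$1$j4
  + M$3$j1 * M$4$j2 * M$1$j3 * M$2$j4 - M$3$j1 * M$4$j2 * M$2$j3 * M$1$j4
  - M$4$j1 * M$1$j2 * M$2$j3 * M$3$j4 + M$4$j1 * M$1$j2 * M$3$j3 * M$2$j4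
  + M$4$j1 * M$2$j2 * M$1$j3 * M$3$j4 - M$4$j1 * M$2$j2 * M$3$j3 * M$1$j4
  - M$4$j1 * M$3$j2 * M$1$j3 * M$2$j4 + M$4$j1 * M$3$j2 * M$2$j3 * M$1$j4"
  by (simp add: sum_4 eps_def)

lemma alpha:
  fixes M :: "real^4^4"
  shows "(\<Sum>i1\<in>UNIV. \<Sum>i2\<in>UNIV. \<Sum>i3\<in>UNIV. \<Sum>i4\<in>UNIV.
     eps i1 i2 i3 i4 * (M$i1$j1 * M$i2$j2 * M$i3$j3 * M$i4$j4)) = det M * eps j1 j2 j3 j4"
proof -
  have "\<forall>j1 j2 j3 j4. M$1$j1 * M$2$j2 * M$3$j3 * M$4$j4 - M$1$j1 * M$2$j2 * M$4$j3 * M$3$j4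
  - M$1$j1 * M$3$j2 * M$2$j3 * M$4$j4 + M$1$j1 * M$3$j2 * M$4$j3 * M$2$j4
  + M$1$j1 * M$4$j2 * M$2$j3 * M$3$j4 - M$1$j1 * M$4$j2 * M$3$j3 * M$2$j4
  - M$2$j1 * M$1$j2 * M$3$j3 * M$4$j4 + M$2$j1 * M$1$j2 * M$4$j3 * M$3$j4
  + M$2$j1 * M$3$j2 * M$1$j3 * M$4$j4 - M$2$j1 * M$3$j2 * M$4$j3 * M$1$j4
  - M$2$j1 * M$4$j2 * M$1$j3 * M$3$j4 + M$2$j1 * M$4$j2 * M$3$j3 * M$1$j4
  + M$3$j1 * M$1$j2 * M$2$j3 * M$4$j4 - M$3$j1 * M$1$j2 * M$4$j3 * M$2$j4
  - M$3$j1 * M$2$j2 * M$1$j3 * M$4$j4 + M$3$j1 * M$2$j2 * M$4$j3 * M$1$j4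
  + M$3$j1 * M$4$j2 * M$1$j3 * M$2$j4 - M$3$j1 * M$4$j2 * M$2$j3 * M$1$j4
  - M$4$j1 * M$1$j2 * M$2$j3 * M$3$j4 + M$4$j1 * M$1$j2 * M$3$j3 * M$2$j4
  + M$4$j1 * M$2$j2 * M$1$j3 * M$3$j4 - M$4$j1 * M$2$j2 * M$3$j3 * M$1$j4
  - M$4$j1 * M$3$j2 * M$1$j3 * M$2$j4 + M$4$j1 * M$3$j2 * M$2$j3 * M$1$j4 = det M * eps j1 j2 j3 j4"
    unfolding forall_4 det_4 by (simp add: eps_def algebra_simps)
  thus ?thesis unfolding alpha_T by blast
qed

lemma eps_tab[simp]:
  "eps 1 1 1 1 = 0"
  "eps 1 1 1 2 = 0"
  "eps 1 1 1 3 = 0"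
  "eps 1 1 1 4 = 0"
  "eps 1 1 2 1 = 0"
  "eps 1 1 2 2 = 0"
  "eps 1 1 2 3 = 0"
  "eps 1 1 2 4 = 0"
  "eps 1 1 3 1 = 0"
  "eps 1 1 3 2 = 0"
  "eps 1 1 3 3 = 0"
  "eps 1 1 3 4 = 0"
  "eps 1 1 4 1 = 0"
  "eps 1 1 4 2 = 0"
  "eps 1 1 4 3 = 0"
  "eps 1 1 4 4 = 0"
  "eps 1 2 1 1 = 0"
  "eps 1 2 1 2 = 0"
  "eps 1 2 1 3 = 0"
  "eps 1 2 1 4 = 0"
  "eps 1 2 2 1 = 0"
  "eps 1 2 2 2 = 0"
  "eps 1 2 2 3 = 0"
  "eps 1 2 2 4 = 0"
  "eps 1 2 3 1 = 0"
  "eps 1 2 3 2 = 0"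
  "eps 1 2 3 3 = 0"
  "eps 1 2 3 4 = 1"
  "eps 1 2 4 1 = 0"
  "eps 1 2 4 2 = 0"
  "eps 1 2 4 3 = -1"
  "eps 1 2 4 4 = 0"
  "eps 1 3 1 1 = 0"
  "eps 1 3 1 2 = 0"
  "eps 1 3 1 3 = 0"
  "eps 1 3 1 4 = 0"
  "eps 1 3 2 1 = 0"
  "eps 1 3 2 2 = 0"
  "eps 1 3 2 3 = 0"
  "eps 1 3 2 4 = -1"
  "eps 1 3 3 1 = 0"
  "eps 1 3 3 2 = 0"
  "eps 1 3 3 3 = 0"
  "eps 1 3 3 4 = 0"
  "eps 1 3 4 1 = 0"
  "eps 1 3 4 2 = 1"
  "eps 1 3 4 3 = 0"
  "eps 1 3 4 4 = 0"
  "eps 1 4 1 1 = 0"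
  "eps 1 4 1 2 = 0"
  "eps 1 4 1 3 = 0"
  "eps 1 4 1 4 = 0"
  "eps 1 4 2 1 = 0"
  "eps 1 4 2 2 = 0"
  "eps 1 4 2 3 = 1"
  "eps 1 4 2 4 = 0"
  "eps 1 4 3 1 = 0"
  "eps 1 4 3 2 = -1"
  "eps 1 4 3 3 = 0"
  "eps 1 4 3 4 = 0"
  "eps 1 4 4 1 = 0"
  "eps 1 4 4 2 = 0"
  "eps 1 4 4 3 = 0"
  "eps 1 4 4 4 = 0"
  "eps 2 1 1 1 = 0"
  "eps 2 1 1 2 = 0"
  "eps 2 1 1 3 = 0"
  "eps 2 1 1 4 = 0"
  "eps 2 1 2 1 = 0"
  "eps 2 1 2 2 = 0"
  "eps 2 1 2 3 = 0"
  "eps 2 1 2 4 = 0"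
  "eps 2 1 3 1 = 0"
  "eps 2 1 3 2 = 0"
  "eps 2 1 3 3 = 0"
  "eps 2 1 3 4 = -1"
  "eps 2 1 4 1 = 0"
  "eps 2 1 4 2 = 0"
  "eps 2 1 4 3 = 1"
  "eps 2 1 4 4 = 0"
  "eps 2 2 1 1 = 0"
  "eps 2 2 1 2 = 0"
  "eps 2 2 1 3 = 0"
  "eps 2 2 1 4 = 0"
  "eps 2 2 2 1 = 0"
  "eps 2 2 2 2 = 0"
  "eps 2 2 2 3 = 0"
  "eps 2 2 2 4 = 0"
  "eps 2 2 3 1 = 0"
  "eps 2 2 3 2 = 0"
  "eps 2 2 3 3 = 0"
  "eps 2 2 3 4 = 0"
  "eps 2 2 4 1 = 0"
  "eps 2 2 4 2 = 0"
  "eps 2 2 4 3 = 0"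
  "eps 2 2 4 4 = 0"
  "eps 2 3 1 1 = 0"
  "eps 2 3 1 2 = 0"
  "eps 2 3 1 3 = 0"
  "eps 2 3 1 4 = 1"
  "eps 2 3 2 1 = 0"
  "eps 2 3 2 2 = 0"
  "eps 2 3 2 3 = 0"
  "eps 2 3 2 4 = 0"
  "eps 2 3 3 1 = 0"
  "eps 2 3 3 2 = 0"
  "eps 2 3 3 3 = 0"
  "eps 2 3 3 4 = 0"
  "eps 2 3 4 1 = -1"
  "eps 2 3 4 2 = 0"
  "eps 2 3 4 3 = 0"
  "eps 2 3 4 4 = 0"
  "eps 2 4 1 1 = 0"
  "eps 2 4 1 2 = 0"
  "eps 2 4 1 3 = -1"
  "eps 2 4 1 4 = 0"
  "eps 2 4 2 1 = 0"
  "eps 2 4 2 2 = 0"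
  "eps 2 4 2 3 = 0"
  "eps 2 4 2 4 = 0"
  "eps 2 4 3 1 = 1"
  "eps 2 4 3 2 = 0"
  "eps 2 4 3 3 = 0"
  "eps 2 4 3 4 = 0"
  "eps 2 4 4 1 = 0"
  "eps 2 4 4 2 = 0"
  "eps 2 4 4 3 = 0"
  "eps 2 4 4 4 = 0"
  "eps 3 1 1 1 = 0"
  "eps 3 1 1 2 = 0"
  "eps 3 1 1 3 = 0"
  "eps 3 1 1 4 = 0"
  "eps 3 1 2 1 = 0"
  "eps 3 1 2 2 = 0"
  "eps 3 1 2 3 = 0"
  "eps 3 1 2 4 = 1"
  "eps 3 1 3 1 = 0"
  "eps 3 1 3 2 = 0"
  "eps 3 1 3 3 = 0"
  "eps 3 1 3 4 = 0"
  "eps 3 1 4 1 = 0"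
  "eps 3 1 4 2 = -1"
  "eps 3 1 4 3 = 0"
  "eps 3 1 4 4 = 0"
  "eps 3 2 1 1 = 0"
  "eps 3 2 1 2 = 0"
  "eps 3 2 1 3 = 0"
  "eps 3 2 1 4 = -1"
  "eps 3 2 2 1 = 0"
  "eps 3 2 2 2 = 0"
  "eps 3 2 2 3 = 0"
  "eps 3 2 2 4 = 0"
  "eps 3 2 3 1 = 0"
  "eps 3 2 3 2 = 0"
  "eps 3 2 3 3 = 0"
  "eps 3 2 3 4 = 0"
  "eps 3 2 4 1 = 1"
  "eps 3 2 4 2 = 0"
  "eps 3 2 4 3 = 0"
  "eps 3 2 4 4 = 0"
  "eps 3 3 1 1 = 0"
  "eps 3 3 1 2 = 0"
  "eps 3 3 1 3 = 0"
  "eps 3 3 1 4 = 0"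
  "eps 3 3 2 1 = 0"
  "eps 3 3 2 2 = 0"
  "eps 3 3 2 3 = 0"
  "eps 3 3 2 4 = 0"
  "eps 3 3 3 1 = 0"
  "eps 3 3 3 2 = 0"
  "eps 3 3 3 3 = 0"
  "eps 3 3 3 4 = 0"
  "eps 3 3 4 1 = 0"
  "eps 3 3 4 2 = 0"
  "eps 3 3 4 3 = 0"
  "eps 3 3 4 4 = 0"
  "eps 3 4 1 1 = 0"
  "eps 3 4 1 2 = 1"
  "eps 3 4 1 3 = 0"
  "eps 3 4 1 4 = 0"
  "eps 3 4 2 1 = -1"
  "eps 3 4 2 2 = 0"
  "eps 3 4 2 3 = 0"
  "eps 3 4 2 4 = 0"
  "eps 3 4 3 1 = 0"
  "eps 3 4 3 2 = 0"
  "eps 3 4 3 3 = 0"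
  "eps 3 4 3 4 = 0"
  "eps 3 4 4 1 = 0"
  "eps 3 4 4 2 = 0"
  "eps 3 4 4 3 = 0"
  "eps 3 4 4 4 = 0"
  "eps 4 1 1 1 = 0"
  "eps 4 1 1 2 = 0"
  "eps 4 1 1 3 = 0"
  "eps 4 1 1 4 = 0"
  "eps 4 1 2 1 = 0"
  "eps 4 1 2 2 = 0"
  "eps 4 1 2 3 = -1"
  "eps 4 1 2 4 = 0"
  "eps 4 1 3 1 = 0"
  "eps 4 1 3 2 = 1"
  "eps 4 1 3 3 = 0"
  "eps 4 1 3 4 = 0"
  "eps 4 1 4 1 = 0"
  "eps 4 1 4 2 = 0"
  "eps 4 1 4 3 = 0"
  "eps 4 1 4 4 = 0"
  "eps 4 2 1 1 = 0"
  "eps 4 2 1 2 = 0"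
  "eps 4 2 1 3 = 1"
  "eps 4 2 1 4 = 0"
  "eps 4 2 2 1 = 0"
  "eps 4 2 2 2 = 0"
  "eps 4 2 2 3 = 0"
  "eps 4 2 2 4 = 0"
  "eps 4 2 3 1 = -1"
  "eps 4 2 3 2 = 0"
  "eps 4 2 3 3 = 0"
  "eps 4 2 3 4 = 0"
  "eps 4 2 4 1 = 0"
  "eps 4 2 4 2 = 0"
  "eps 4 2 4 3 = 0"
  "eps 4 2 4 4 = 0"
  "eps 4 3 1 1 = 0"
  "eps 4 3 1 2 = -1"
  "eps 4 3 1 3 = 0"
  "eps 4 3 1 4 = 0"
  "eps 4 3 2 1 = 1"
  "eps 4 3 2 2 = 0"
  "eps 4 3 2 3 = 0"
  "eps 4 3 2 4 = 0"
  "eps 4 3 3 1 = 0"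
  "eps 4 3 3 2 = 0"
  "eps 4 3 3 3 = 0"
  "eps 4 3 3 4 = 0"
  "eps 4 3 4 1 = 0"
  "eps 4 3 4 2 = 0"
  "eps 4 3 4 3 = 0"
  "eps 4 3 4 4 = 0"
  "eps 4 4 1 1 = 0"
  "eps 4 4 1 2 = 0"
  "eps 4 4 1 3 = 0"
  "eps 4 4 1 4 = 0"
  "eps 4 4 2 1 = 0"
  "eps 4 4 2 2 = 0"
  "eps 4 4 2 3 = 0"
  "eps 4 4 2 4 = 0"
  "eps 4 4 3 1 = 0"
  "eps 4 4 3 2 = 0"
  "eps 4 4 3 3 = 0"
  "eps 4 4 3 4 = 0"
  "eps 4 4 4 1 = 0"
  "eps 4 4 4 2 = 0"
  "eps 4 4 4 3 = 0"
  "eps 4 4 4 4 = 0"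
  by (simp_all add: eps_def)
definition dl :: "4 \<Rightarrow> 4 \<Rightarrow> real" where "dl x y = (if x = y then 1 else 0)"
lemma dl_tab[simp]: "dl 1 1 = 1" "dl 1 2 = 0" "dl 1 3 = 0" "dl 1 4 = 0" "dl 2 1 = 0" "dl 2 2 = 1" "dl 2 3 = 0" "dl 2 4 = 0" "dl 3 1 = 0" "dl 3 2 = 0" "dl 3 3 = 1" "dl 3 4 = 0" "dl 4 1 = 0" "dl 4 2 = 0" "dl 4 3 = 0" "dl 4 4 = 1" by (simp_all add: dl_def)
lemma gamma: "(\<Sum>l\<in>UNIV. eps a1 a2 a3 l * eps i1 i2 i3 l) =
   dl a1 i1 * (dl a2 i2 * dl a3 i3 - dl a2 i3 * dl a3 i2) - dl a1 i2 * (dl a2 i1 * dl a3 i3 - dl a2 i3 * dl a3 i1) + dl a1 i3 * (dl a2 i1 * dl a3 i2 - dl a2 i2 * dl a3 i1)"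
proof -
  have "\<forall>a1 a2 a3 i1 i2 i3. (\<Sum>l\<in>UNIV. eps a1 a2 a3 l * eps i1 i2 i3 l) =
   dl a1 i1 * (dl a2 i2 * dl a3 i3 - dl a2 i3 * dl a3 i2) - dl a1 i2 * (dl a2 i1 * dl a3 i3 - dl a2 i3 * dl a3 i1) + dl a1 i3 * (dl a2 i1 * dl a3 i2 - dl a2 i2 * dl a3 i1)"
    unfolding forall_4 sum_4 by (simp only: eps_tab dl_tab) simp
  thus ?thesis by blast
qed


lemma dl_sum1[simp]: "(\<Sum>i\<in>UNIV. dl a i * X i) = X a" "(\<Sum>i\<in>UNIV. X i * dl a i) = X a"
  "(\<Sum>i\<in>UNIV. dl i a * X i) = X a" "(\<Sum>i\<in>UNIV. X i * dl i a) = X a"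
proof -
  have e: "(\<lambda>i. dl a i * X i) = (\<lambda>i. if a = i then X a else 0)" "(\<lambda>i. X i * dl a i) = (\<lambda>i. if a = i then X a else 0)"
    "(\<lambda>i. dl i a * X i) = (\<lambda>i. if a = i then X a else 0)" "(\<lambda>i. X i * dl i a) = (\<lambda>i. if a = i then X a else 0)"
    by (auto simp: dl_def fun_eq_iff)
  show "(\<Sum>i\<in>UNIV. dl a i * X i) = X a" "(\<Sum>i\<in>UNIV. X i * dl a i) = X a"
    "(\<Sum>i\<in>UNIV. dl i a * X i) = X a" "(\<Sum>i\<in>UNIV. X i * dl i a) = X a"
    unfolding e by simp_all
qed

lemma swap4:
  "(\<Sum>j\<in>UNIV. \<Sum>a\<in>UNIV. \<Sum>b\<in>UNIV. \<Sum>c\<in>UNIV. \<Sum>d\<in>UNIV. f a b c d j) =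
   (\<Sum>a\<in>UNIV. \<Sum>b\<in>UNIV. \<Sum>c\<in>UNIV. \<Sum>d\<in>UNIV. \<Sum>j\<in>UNIV. (f a b c d j :: real))"
proof -
  have "(\<Sum>j\<in>UNIV. \<Sum>a\<in>UNIV. \<Sum>b\<in>UNIV. \<Sum>c\<in>UNIV. \<Sum>d\<in>UNIV. f a b c d j) =
     (\<Sum>a\<in>UNIV. \<Sum>j\<in>UNIV. \<Sum>b\<in>UNIV. \<Sum>c\<in>UNIV. \<Sum>d\<in>UNIV. f a b c d j)" by (rule sum.swap)
  also have "\<dots> = (\<Sum>a\<in>UNIV. \<Sum>b\<in>UNIV. \<Sum>j\<in>UNIV. \<Sum>c\<in>UNIV. \<Sum>d\<in>UNIV. f a b c d j)"
    by (rule sum.cong[OF refl], rule sum.swap)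
  also have "\<dots> = (\<Sum>a\<in>UNIV. \<Sum>b\<in>UNIV. \<Sum>c\<in>UNIV. \<Sum>j\<in>UNIV. \<Sum>d\<in>UNIV. f a b c d j)"
    by (rule sum.cong[OF refl], rule sum.cong[OF refl], rule sum.swap)
  also have "\<dots> = (\<Sum>a\<in>UNIV. \<Sum>b\<in>UNIV. \<Sum>c\<in>UNIV. \<Sum>d\<in>UNIV. \<Sum>j\<in>UNIV. f a b c d j)"
    by (rule sum.cong[OF refl], rule sum.cong[OF refl], rule sum.cong[OF refl], rule sum.swap)
  finally show ?thesis .
qed

lemma W_lemma:
  fixes G B :: "real^4^4"
  assumes BG: "B ** G = mat 1" and dB: "det B * det G = 1"
  shows "(\<Sum>i1\<in>UNIV. \<Sum>i2\<in>UNIV. \<Sum>i3\<in>UNIV. eps i1 i2 i3 l * (B$i1$j1 * B$i2$j2 * B$i3$j3))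
     = det B * (\<Sum>y\<in>UNIV. eps j1 j2 j3 y * G$y$l)"
proof -
  have bg: "(\<Sum>j\<in>UNIV. B$i$j * G$j$l) = dl i l" for i
    using arg_cong[OF BG, of "\<lambda>M. M$i$l"] by (simp add: matrix_matrix_mult_def mat_def dl_def)
  have "det B * (\<Sum>y\<in>UNIV. eps j1 j2 j3 y * G$y$l) = (\<Sum>j4\<in>UNIV. (det B * eps j1 j2 j3 j4) * G$j4$l)"
    by (simp add: sum_distrib_left mult.assoc)
  also have "\<dots> = (\<Sum>j4\<in>UNIV. (\<Sum>i1\<in>UNIV. \<Sum>i2\<in>UNIV. \<Sum>i3\<in>UNIV. \<Sum>i4\<in>UNIV.
     eps i1 i2 i3 i4 * (B$i1$j1 * B$i2$j2 * B$i3$j3 * B$i4$j4)) * G$j4$l)"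
    by (simp add: alpha)
  also have "\<dots> = (\<Sum>j4\<in>UNIV. \<Sum>i1\<in>UNIV. \<Sum>i2\<in>UNIV. \<Sum>i3\<in>UNIV. \<Sum>i4\<in>UNIV.
     eps i1 i2 i3 i4 * (B$i1$j1 * B$i2$j2 * B$i3$j3) * (B$i4$j4 * G$j4$l))"
    by (simp only: sum_distrib_right) (simp add: mult.assoc)
  also have "\<dots> = (\<Sum>i1\<in>UNIV. \<Sum>i2\<in>UNIV. \<Sum>i3\<in>UNIV. \<Sum>i4\<in>UNIV. \<Sum>j4\<in>UNIV.
     eps i1 i2 i3 i4 * (B$i1$j1 * B$i2$j2 * B$i3$j3) * (B$i4$j4 * G$j4$l))"
    by (rule swap4)
  also have "\<dots> = (\<Sum>i1\<in>UNIV. \<Sum>i2\<in>UNIV. \<Sum>i3\<in>UNIV. \<Sum>i4\<in>UNIV.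
     eps i1 i2 i3 i4 * (B$i1$j1 * B$i2$j2 * B$i3$j3) * dl i4 l)"
    by (simp add: sum_distrib_left[symmetric] bg)
  also have "\<dots> = (\<Sum>i1\<in>UNIV. \<Sum>i2\<in>UNIV. \<Sum>i3\<in>UNIV. eps i1 i2 i3 l * (B$i1$j1 * B$i2$j2 * B$i3$j3))"
    by simp
  finally show ?thesis ..
qed


lemma s1: "(\<Sum>a\<in>UNIV. \<Sum>b\<in>UNIV. \<Sum>c\<in>UNIV. \<Sum>d\<in>UNIV. (F a b c d :: real)) = (\<Sum>b\<in>UNIV. \<Sum>a\<in>UNIV. \<Sum>c\<in>UNIV. \<Sum>d\<in>UNIV. F a b c d)"
  by (rule sum.swap)
lemma s2: "(\<Sum>a\<in>UNIV. \<Sum>b\<in>UNIV. \<Sum>c\<in>UNIV. \<Sum>d\<in>UNIV. (F a b c d :: real)) = (\<Sum>a\<in>UNIV. \<Sum>c\<in>UNIV. \<Sum>b\<in>UNIV. \<Sum>d\<in>UNIV. F a b c d)"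
  by (rule sum.cong[OF refl], rule sum.swap)
lemma s3: "(\<Sum>a\<in>UNIV. \<Sum>b\<in>UNIV. \<Sum>c\<in>UNIV. \<Sum>d\<in>UNIV. (F a b c d :: real)) = (\<Sum>a\<in>UNIV. \<Sum>b\<in>UNIV. \<Sum>d\<in>UNIV. \<Sum>c\<in>UNIV. F a b c d)"
  by (rule sum.cong[OF refl], rule sum.cong[OF refl], rule sum.swap)

lemma P2: "(\<Sum>a\<in>UNIV. \<Sum>b\<in>UNIV. \<Sum>c\<in>UNIV. \<Sum>d\<in>UNIV. (F a b c d :: real)) = (\<Sum>a\<in>UNIV. \<Sum>c\<in>UNIV. \<Sum>d\<in>UNIV. \<Sum>b\<in>UNIV. F a b c d)"
proof -
  have "(\<Sum>a\<in>UNIV. \<Sum>b\<in>UNIV. \<Sum>c\<in>UNIV. \<Sum>d\<in>UNIV. (F a b c d :: real)) = (\<Sum>a\<in>UNIV. \<Sum>c\<in>UNIV. \<Sum>b\<in>UNIV. \<Sum>d\<in>UNIV. F a b c d)" by (rule s2)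
  also have "\<dots> = (\<Sum>a\<in>UNIV. \<Sum>c\<in>UNIV. \<Sum>d\<in>UNIV. \<Sum>b\<in>UNIV. F a b c d)" by (rule s3)
  finally show ?thesis .
qed

lemma P3: "(\<Sum>a\<in>UNIV. \<Sum>b\<in>UNIV. \<Sum>c\<in>UNIV. \<Sum>d\<in>UNIV. (F a b c d :: real)) = (\<Sum>a\<in>UNIV. \<Sum>d\<in>UNIV. \<Sum>c\<in>UNIV. \<Sum>b\<in>UNIV. F a b c d)"
proof -
  have "(\<Sum>a\<in>UNIV. \<Sum>b\<in>UNIV. \<Sum>c\<in>UNIV. \<Sum>d\<in>UNIV. (F a b c d :: real)) = (\<Sum>a\<in>UNIV. \<Sum>b\<in>UNIV. \<Sum>d\<in>UNIV. \<Sum>c\<in>UNIV. F a b c d)" by (rule s3)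
  also have "\<dots> = (\<Sum>a\<in>UNIV. \<Sum>d\<in>UNIV. \<Sum>b\<in>UNIV. \<Sum>c\<in>UNIV. F a b c d)" by (rule s2)
  also have "\<dots> = (\<Sum>a\<in>UNIV. \<Sum>d\<in>UNIV. \<Sum>c\<in>UNIV. \<Sum>b\<in>UNIV. F a b c d)" by (rule s3)
  finally show ?thesis .
qed

lemma P4: "(\<Sum>a\<in>UNIV. \<Sum>b\<in>UNIV. \<Sum>c\<in>UNIV. \<Sum>d\<in>UNIV. (F a b c d :: real)) = (\<Sum>b\<in>UNIV. \<Sum>c\<in>UNIV. \<Sum>d\<in>UNIV. \<Sum>a\<in>UNIV. F a b c d)"
proof -
  have "(\<Sum>a\<in>UNIV. \<Sum>b\<in>UNIV. \<Sum>c\<in>UNIV. \<Sum>d\<in>UNIV. (F a b c d :: real)) = (\<Sum>b\<in>UNIV. \<Sum>a\<in>UNIV. \<Sum>c\<in>UNIV. \<Sum>d\<in>UNIV. F a b c d)" by (rule s1)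
  also have "\<dots> = (\<Sum>b\<in>UNIV. \<Sum>c\<in>UNIV. \<Sum>a\<in>UNIV. \<Sum>d\<in>UNIV. F a b c d)" by (rule s2)
  also have "\<dots> = (\<Sum>b\<in>UNIV. \<Sum>c\<in>UNIV. \<Sum>d\<in>UNIV. \<Sum>a\<in>UNIV. F a b c d)" by (rule s3)
  finally show ?thesis .
qed

lemma P1: "(\<Sum>a\<in>UNIV. \<Sum>b\<in>UNIV. \<Sum>c\<in>UNIV. \<Sum>d\<in>UNIV. (F a b c d :: real)) = (\<Sum>b\<in>UNIV. \<Sum>d\<in>UNIV. \<Sum>c\<in>UNIV. \<Sum>a\<in>UNIV. F a b c d)"
proof -
  have "(\<Sum>a\<in>UNIV. \<Sum>b\<in>UNIV. \<Sum>c\<in>UNIV. \<Sum>d\<in>UNIV. (F a b c d :: real)) = (\<Sum>b\<in>UNIV. \<Sum>c\<in>UNIV. \<Sum>d\<in>UNIV. \<Sum>a\<in>UNIV. F a b c d)" by (rule P4)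
  also have "\<dots> = (\<Sum>b\<in>UNIV. \<Sum>d\<in>UNIV. \<Sum>c\<in>UNIV. \<Sum>a\<in>UNIV. F a b c d)" by (rule s2)
  finally show ?thesis .
qed

lemma sum4_cong: "(\<And>a b c d. f a b c d = g a b c d) \<Longrightarrow>
  (\<Sum>a\<in>A. \<Sum>b\<in>B. \<Sum>c\<in>C. \<Sum>d\<in>D. (f a b c d :: real)) = (\<Sum>a\<in>A. \<Sum>b\<in>B. \<Sum>c\<in>C. \<Sum>d\<in>D. g a b c d)"
  by simp

definition det3B :: "real^4^4 \<Rightarrow> 4 \<Rightarrow> 4 \<Rightarrow> 4 \<Rightarrow> 4 \<Rightarrow> 4 \<Rightarrow> 4 \<Rightarrow> real" where
  "det3B B a r d b q c = B$a$b * (B$r$q * B$d$c - B$r$c * B$d$q) - B$a$q * (B$r$b * B$d$c - B$r$c * B$d$b)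
     + B$a$c * (B$r$b * B$d$q - B$r$q * B$d$b)"

lemma contraction:
  fixes B :: "real^4^4" and R :: "4\<Rightarrow>4\<Rightarrow>4\<Rightarrow>4\<Rightarrow>real"
  assumes R1: "\<And>q c r d. R q c r d = - R c q r d" and R2: "\<And>q c r d. R q c r d = - R q c d r"
    and Bs: "\<And>i j. B$i$j = B$j$i"
  defines "Ric \<equiv> \<lambda>s n. \<Sum>r\<in>UNIV. \<Sum>q\<in>UNIV. B$r$q * R q s r n"
  defines "sc \<equiv> \<Sum>s\<in>UNIV. \<Sum>n\<in>UNIV. B$s$n * Ric s n"
  defines "RicU \<equiv> \<lambda>a b. \<Sum>c\<in>UNIV. \<Sum>d\<in>UNIV. B$a$c * B$b$d * Ric c d"
  shows "(\<Sum>q\<in>UNIV. \<Sum>c\<in>UNIV. \<Sum>r\<in>UNIV. \<Sum>d\<in>UNIV. R q c r d * det3B B a r d b q c) = 2 * B$a$b * sc - 4 * RicU a b"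
proof -
  define F where "F q c r d = B$d$c * (B$r$q * R q c r d)" for q c r d
  have scF: "sc = (\<Sum>q\<in>UNIV. \<Sum>c\<in>UNIV. \<Sum>r\<in>UNIV. \<Sum>d\<in>UNIV. F q c r d)"
  proof -
    have "(\<Sum>q\<in>UNIV. \<Sum>c\<in>UNIV. \<Sum>r\<in>UNIV. \<Sum>d\<in>UNIV. F q c r d) = (\<Sum>c\<in>UNIV. \<Sum>d\<in>UNIV. \<Sum>r\<in>UNIV. \<Sum>q\<in>UNIV. F q c r d)"
      by (rule P1)
    also have "\<dots> = sc" unfolding sc_def Ric_def F_def by (simp add: sum_distrib_left Bs[of _ c for c])
    finally show ?thesis ..
  qed
  have X1: "(\<Sum>q\<in>UNIV. \<Sum>c\<in>UNIV. \<Sum>r\<in>UNIV. \<Sum>d\<in>UNIV. B$a$b * (B$r$q * B$d$c) * R q c r d) = B$a$b * sc"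
    unfolding scF F_def by (simp add: sum_distrib_left mult_ac)
  have X2: "(\<Sum>q\<in>UNIV. \<Sum>c\<in>UNIV. \<Sum>r\<in>UNIV. \<Sum>d\<in>UNIV. B$a$b * (B$r$c * B$d$q) * R q c r d) = - (B$a$b * sc)"
  proof -
    have p: "B$a$b * (B$r$c * B$d$q) * R q c r d = - (B$a$b * F c q r d)" for q c r d
      by (simp add: F_def R1[of q c r d] mult_ac)
    have "(\<Sum>q\<in>UNIV. \<Sum>c\<in>UNIV. \<Sum>r\<in>UNIV. \<Sum>d\<in>UNIV. B$a$b * (B$r$c * B$d$q) * R q c r d)
       = (\<Sum>q\<in>UNIV. \<Sum>c\<in>UNIV. \<Sum>r\<in>UNIV. \<Sum>d\<in>UNIV. - (B$a$b * F c q r d))"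
      by (simp only: p)
    also have "\<dots> = - (B$a$b * (\<Sum>q\<in>UNIV. \<Sum>c\<in>UNIV. \<Sum>r\<in>UNIV. \<Sum>d\<in>UNIV. F c q r d))"
      by (simp add: sum_distrib_left sum_negf)
    also have "(\<Sum>q\<in>UNIV. \<Sum>c\<in>UNIV. \<Sum>r\<in>UNIV. \<Sum>d\<in>UNIV. F c q r d) = sc"
      unfolding scF by (rule s1)
    finally show ?thesis .
  qed
  have X3: "(\<Sum>q\<in>UNIV. \<Sum>c\<in>UNIV. \<Sum>r\<in>UNIV. \<Sum>d\<in>UNIV. B$a$q * B$r$b * B$d$c * R q c r d) = RicU a b"
  proof -
    have p: "B$a$q * B$r$b * B$d$c * R q c r d = B$a$q * B$b$r * (B$d$c * R c q d r)" for q c r d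
      by (simp add: R1[of q c r d] R2[of c q r d] Bs[of r b])
    have "(\<Sum>q\<in>UNIV. \<Sum>c\<in>UNIV. \<Sum>r\<in>UNIV. \<Sum>d\<in>UNIV. B$a$q * B$r$b * B$d$c * R q c r d)
      = (\<Sum>q\<in>UNIV. \<Sum>r\<in>UNIV. \<Sum>d\<in>UNIV. \<Sum>c\<in>UNIV. B$a$q * B$r$b * B$d$c * R q c r d)" by (rule P2)
    also have "\<dots> = (\<Sum>q\<in>UNIV. \<Sum>r\<in>UNIV. \<Sum>d\<in>UNIV. \<Sum>c\<in>UNIV. B$a$q * B$b$r * (B$d$c * R c q d r))"
      by (simp only: p)
    also have "\<dots> = (\<Sum>q\<in>UNIV. \<Sum>r\<in>UNIV. B$a$q * B$b$r * (\<Sum>d\<in>UNIV. \<Sum>c\<in>UNIV. B$d$c * R c q d r))"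
      by (simp add: sum_distrib_left)
    also have "\<dots> = RicU a b" unfolding RicU_def Ric_def ..
    finally show ?thesis .
  qed
  have X4: "(\<Sum>q\<in>UNIV. \<Sum>c\<in>UNIV. \<Sum>r\<in>UNIV. \<Sum>d\<in>UNIV. B$a$q * B$r$c * B$d$b * R q c r d) = - RicU a b"
  proof -
    have p: "B$a$q * B$r$c * B$d$b * R q c r d = - (B$a$q * B$b$d * (B$r$c * R c q r d))" for q c r d
      by (simp add: R1[of q c r d] Bs[of d b] mult_ac)
    have "(\<Sum>q\<in>UNIV. \<Sum>c\<in>UNIV. \<Sum>r\<in>UNIV. \<Sum>d\<in>UNIV. B$a$q * B$r$c * B$d$b * R q c r d)
      = (\<Sum>q\<in>UNIV. \<Sum>d\<in>UNIV. \<Sum>r\<in>UNIV. \<Sum>c\<in>UNIV. B$a$q * B$r$c * B$d$b * R q c r d)" by (rule P3)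
    also have "\<dots> = (\<Sum>q\<in>UNIV. \<Sum>d\<in>UNIV. \<Sum>r\<in>UNIV. \<Sum>c\<in>UNIV. - (B$a$q * B$b$d * (B$r$c * R c q r d)))"
      by (simp only: p)
    also have "\<dots> = (\<Sum>q\<in>UNIV. \<Sum>d\<in>UNIV. - (B$a$q * B$b$d * (\<Sum>r\<in>UNIV. \<Sum>c\<in>UNIV. B$r$c * R c q r d)))"
      by (simp add: sum_distrib_left sum_negf)
    also have "\<dots> = - RicU a b" unfolding RicU_def Ric_def by (simp add: sum_negf)
    finally show ?thesis .
  qed
  have X5: "(\<Sum>q\<in>UNIV. \<Sum>c\<in>UNIV. \<Sum>r\<in>UNIV. \<Sum>d\<in>UNIV. B$a$c * B$r$b * B$d$q * R q c r d) = - RicU a b"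
  proof -
    have p: "B$a$c * B$r$b * B$d$q * R q c r d = - (B$a$c * B$b$r * (B$d$q * R q c d r))" for q c r d
      by (simp add: R2[of q c r d] Bs[of r b] mult_ac)
    have "(\<Sum>q\<in>UNIV. \<Sum>c\<in>UNIV. \<Sum>r\<in>UNIV. \<Sum>d\<in>UNIV. B$a$c * B$r$b * B$d$q * R q c r d)
      = (\<Sum>c\<in>UNIV. \<Sum>r\<in>UNIV. \<Sum>d\<in>UNIV. \<Sum>q\<in>UNIV. B$a$c * B$r$b * B$d$q * R q c r d)" by (rule P4)
    also have "\<dots> = (\<Sum>c\<in>UNIV. \<Sum>r\<in>UNIV. \<Sum>d\<in>UNIV. \<Sum>q\<in>UNIV. - (B$a$c * B$b$r * (B$d$q * R q c d r)))"
      by (simp only: p)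
    also have "\<dots> = (\<Sum>c\<in>UNIV. \<Sum>r\<in>UNIV. - (B$a$c * B$b$r * (\<Sum>d\<in>UNIV. \<Sum>q\<in>UNIV. B$d$q * R q c d r)))"
      by (simp add: sum_distrib_left sum_negf)
    also have "\<dots> = - RicU a b" unfolding RicU_def Ric_def by (simp add: sum_negf)
    finally show ?thesis .
  qed
  have X6: "(\<Sum>q\<in>UNIV. \<Sum>c\<in>UNIV. \<Sum>r\<in>UNIV. \<Sum>d\<in>UNIV. B$a$c * B$r$q * B$d$b * R q c r d) = RicU a b"
  proof -
    have p: "B$a$c * B$r$q * B$d$b * R q c r d = B$a$c * B$b$d * (B$r$q * R q c r d)" for q c r d
      by (simp add: Bs[of d b] mult_ac)
    have "(\<Sum>q\<in>UNIV. \<Sum>c\<in>UNIV. \<Sum>r\<in>UNIV. \<Sum>d\<in>UNIV. B$a$c * B$r$q * B$d$b * R q c r d)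
      = (\<Sum>c\<in>UNIV. \<Sum>d\<in>UNIV. \<Sum>r\<in>UNIV. \<Sum>q\<in>UNIV. B$a$c * B$r$q * B$d$b * R q c r d)" by (rule P1)
    also have "\<dots> = (\<Sum>c\<in>UNIV. \<Sum>d\<in>UNIV. \<Sum>r\<in>UNIV. \<Sum>q\<in>UNIV. B$a$c * B$b$d * (B$r$q * R q c r d))"
      by (simp only: p)
    also have "\<dots> = (\<Sum>c\<in>UNIV. \<Sum>d\<in>UNIV. B$a$c * B$b$d * (\<Sum>r\<in>UNIV. \<Sum>q\<in>UNIV. B$r$q * R q c r d))"
      by (simp add: sum_distrib_left)
    also have "\<dots> = RicU a b" unfolding RicU_def Ric_def ..
    finally show ?thesis .
  qed
  have split: "R q c r d * det3B B a r d b q c =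
     B$a$b * (B$r$q * B$d$c) * R q c r d - B$a$b * (B$r$c * B$d$q) * R q c r d
     - B$a$q * B$r$b * B$d$c * R q c r d + B$a$q * B$r$c * B$d$b * R q c r d
     + B$a$c * B$r$b * B$d$q * R q c r d - B$a$c * B$r$q * B$d$b * R q c r d" for q c r d
    unfolding det3B_def by (simp add: algebra_simps)
  show ?thesis unfolding split
    by (simp only: sum.distrib sum_subtractf X1 X2 X3 X4 X5 X6)
qed


definition EE :: "real^4^4 \<Rightarrow> 4 \<Rightarrow> 4 \<Rightarrow> 4 \<Rightarrow> 4 \<Rightarrow> 4 \<Rightarrow> 4 \<Rightarrow> real" where
  "EE G a1 a2 a3 j1 j2 j3 = (\<Sum>l\<in>UNIV. \<Sum>y\<in>UNIV. eps a1 a2 a3 l * eps j1 j2 j3 y * G$y$l)"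

lemma gamma2: "(\<Sum>l\<in>UNIV. eps a1 a2 a3 l * eps i1 i2 i3 l) =
   dl a1 i1 * dl a2 i2 * dl a3 i3 - dl a1 i1 * dl a3 i2 * dl a2 i3 - dl a2 i1 * dl a1 i2 * dl a3 i3
   + dl a3 i1 * dl a1 i2 * dl a2 i3 + dl a2 i1 * dl a3 i2 * dl a1 i3 - dl a3 i1 * dl a2 i2 * dl a1 i3"
  unfolding gamma by (simp add: algebra_simps)

lemma collapse3: "(\<Sum>i1\<in>UNIV. \<Sum>i2\<in>UNIV. \<Sum>i3\<in>UNIV. dl x i1 * dl y i2 * dl z i3 * F i1 i2 i3) = F x y z"
proof -
  have "(\<Sum>i3\<in>UNIV. dl x i1 * dl y i2 * dl z i3 * F i1 i2 i3) = dl x i1 * dl y i2 * F i1 i2 z" for i1 i2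
    using dl_sum1(1)[of z "\<lambda>i3. F i1 i2 i3"] by (simp add: sum_distrib_left[symmetric] mult.assoc)
  hence "(\<Sum>i1\<in>UNIV. \<Sum>i2\<in>UNIV. \<Sum>i3\<in>UNIV. dl x i1 * dl y i2 * dl z i3 * F i1 i2 i3)
     = (\<Sum>i1\<in>UNIV. \<Sum>i2\<in>UNIV. dl x i1 * (dl y i2 * F i1 i2 z))" by (simp add: mult.assoc)
  also have "\<dots> = (\<Sum>i1\<in>UNIV. dl x i1 * F i1 y z)" by (simp add: sum_distrib_left[symmetric])
  also have "\<dots> = F x y z" by simp
  finally show ?thesis .
qed

lemma jacobi:
  fixes G B :: "real^4^4"
  assumes BG: "B ** G = mat 1" and dBG: "det B * det G = 1"
  shows "EE G a1 a2 a3 j1 j2 j3 = det G * det3B B a1 a2 a3 j1 j2 j3"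
proof -
  define W where "W l = (\<Sum>i1\<in>UNIV. \<Sum>i2\<in>UNIV. \<Sum>i3\<in>UNIV. eps i1 i2 i3 l * (B$i1$j1 * B$i2$j2 * B$i3$j3))" for l
  have Wl: "(\<Sum>y\<in>UNIV. eps j1 j2 j3 y * G$y$l) = det G * W l" for l
  proof -
    have "det G * W l = det G * det B * (\<Sum>y\<in>UNIV. eps j1 j2 j3 y * G$y$l)"
      unfolding W_def W_lemma[OF BG dBG] by (simp add: mult.assoc)
    thus ?thesis using dBG by (simp add: mult.commute)
  qed
  have "EE G a1 a2 a3 j1 j2 j3 = (\<Sum>l\<in>UNIV. eps a1 a2 a3 l * (\<Sum>y\<in>UNIV. eps j1 j2 j3 y * G$y$l))"
    unfolding EE_def by (simp add: sum_distrib_left mult.assoc)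
  also have "\<dots> = det G * (\<Sum>l\<in>UNIV. \<Sum>i1\<in>UNIV. \<Sum>i2\<in>UNIV. \<Sum>i3\<in>UNIV. eps a1 a2 a3 l * eps i1 i2 i3 l * (B$i1$j1 * B$i2$j2 * B$i3$j3))"
    unfolding Wl W_def by (simp add: sum_distrib_left mult_ac)
  also have "(\<Sum>l\<in>UNIV. \<Sum>i1\<in>UNIV. \<Sum>i2\<in>UNIV. \<Sum>i3\<in>UNIV. eps a1 a2 a3 l * eps i1 i2 i3 l * (B$i1$j1 * B$i2$j2 * B$i3$j3))
     = (\<Sum>i1\<in>UNIV. \<Sum>i2\<in>UNIV. \<Sum>i3\<in>UNIV. \<Sum>l\<in>UNIV. eps a1 a2 a3 l * eps i1 i2 i3 l * (B$i1$j1 * B$i2$j2 * B$i3$j3))"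
    by (rule P4)
  also have "\<dots> = (\<Sum>i1\<in>UNIV. \<Sum>i2\<in>UNIV. \<Sum>i3\<in>UNIV. (\<Sum>l\<in>UNIV. eps a1 a2 a3 l * eps i1 i2 i3 l) * (B$i1$j1 * B$i2$j2 * B$i3$j3))"
    by (simp add: sum_distrib_right)
  also have "\<dots> = (\<Sum>i1\<in>UNIV. \<Sum>i2\<in>UNIV. \<Sum>i3\<in>UNIV.
      dl a1 i1 * dl a2 i2 * dl a3 i3 * (B$i1$j1 * B$i2$j2 * B$i3$j3)
    - dl a1 i1 * dl a3 i2 * dl a2 i3 * (B$i1$j1 * B$i2$j2 * B$i3$j3)
    - dl a2 i1 * dl a1 i2 * dl a3 i3 * (B$i1$j1 * B$i2$j2 * B$i3$j3)
    + dl a3 i1 * dl a1 i2 * dl a2 i3 * (B$i1$j1 * B$i2$j2 * B$i3$j3)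
    + dl a2 i1 * dl a3 i2 * dl a1 i3 * (B$i1$j1 * B$i2$j2 * B$i3$j3)
    - dl a3 i1 * dl a2 i2 * dl a1 i3 * (B$i1$j1 * B$i2$j2 * B$i3$j3))"
    unfolding gamma2 by (simp only: ring_distribs)
  also have "\<dots> = B$a1$j1 * B$a2$j2 * B$a3$j3 - B$a1$j1 * B$a3$j2 * B$a2$j3 - B$a2$j1 * B$a1$j2 * B$a3$j3
    + B$a3$j1 * B$a1$j2 * B$a2$j3 + B$a2$j1 * B$a3$j2 * B$a1$j3 - B$a3$j1 * B$a2$j2 * B$a1$j3"
    by (simp only: sum.distrib sum_subtractf collapse3)
  also have "\<dots> = det3B B a1 a2 a3 j1 j2 j3"
    unfolding det3B_def by (simp add: algebra_simps)
  finally show ?thesis by simp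
qed

lemma einstein_formula:
  fixes G B :: "real^4^4" and R :: "4\<Rightarrow>4\<Rightarrow>4\<Rightarrow>4\<Rightarrow>real"
  assumes BG: "B ** G = mat 1" and GB: "G ** B = mat 1"
    and R1: "\<And>q c r d. R q c r d = - R c q r d" and R2: "\<And>q c r d. R q c r d = - R q c d r"
    and Bs: "\<And>i j. B$i$j = B$j$i" and Gs: "\<And>i j. G$i$j = G$j$i"
  defines "Ric \<equiv> \<lambda>s n. \<Sum>r\<in>UNIV. \<Sum>q\<in>UNIV. B$r$q * R q s r n"
  defines "sc \<equiv> \<Sum>s\<in>UNIV. \<Sum>n\<in>UNIV. B$s$n * Ric s n"
  defines "EU \<equiv> \<lambda>a b. \<Sum>c\<in>UNIV. \<Sum>d\<in>UNIV. B$a$c * B$b$d * (Ric c d - 1/2 * sc * G$c$d)"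
  shows "det G * EU a b = - 1/4 * (\<Sum>q\<in>UNIV. \<Sum>c\<in>UNIV. \<Sum>r\<in>UNIV. \<Sum>d\<in>UNIV. R q c r d * EE G a r d b q c)"
    and "det G * (Ric a b - 1/2 * sc * G$a$b) = (\<Sum>c\<in>UNIV. \<Sum>d\<in>UNIV. G$a$c * G$b$d * (det G * EU c d))"
proof -
  have dBG: "det B * det G = 1" using arg_cong[OF BG, of det] by (simp add: det_mul)
  have bg: "(\<Sum>j\<in>UNIV. B$i$j * G$j$l) = dl i l" for i l
    using arg_cong[OF BG, of "\<lambda>M. M$i$l"] by (simp add: matrix_matrix_mult_def mat_def dl_def)
  have gb: "(\<Sum>j\<in>UNIV. G$i$j * B$j$l) = dl i l" for i l
    using arg_cong[OF GB, of "\<lambda>M. M$i$l"] by (simp add: matrix_matrix_mult_def mat_def dl_def)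
  define RicU where "RicU a b = (\<Sum>c\<in>UNIV. \<Sum>d\<in>UNIV. B$a$c * B$b$d * Ric c d)" for a b
  have BGB: "(\<Sum>c\<in>UNIV. \<Sum>d\<in>UNIV. B$a$c * B$b$d * G$c$d) = B$a$b" for a b
  proof -
    have "(\<Sum>c\<in>UNIV. \<Sum>d\<in>UNIV. B$a$c * B$b$d * G$c$d) = (\<Sum>c\<in>UNIV. B$a$c * (\<Sum>d\<in>UNIV. G$c$d * B$d$b))"
      by (simp add: sum_distrib_left mult_ac Bs[of b])
    also have "\<dots> = B$a$b" by (simp add: gb)
    finally show ?thesis .
  qed
  have EU: "EU a b = RicU a b - 1/2 * sc * B$a$b" for a b
  proof -
    have "EU a b = RicU a b - 1/2 * sc * (\<Sum>c\<in>UNIV. \<Sum>d\<in>UNIV. B$a$c * B$b$d * G$c$d)"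
      unfolding EU_def RicU_def by (simp add: right_diff_distrib sum_subtractf sum_distrib_left mult_ac)
    thus ?thesis by (simp add: BGB)
  qed
  have C: "(\<Sum>q\<in>UNIV. \<Sum>c\<in>UNIV. \<Sum>r\<in>UNIV. \<Sum>d\<in>UNIV. R q c r d * det3B B a r d b q c) = 2 * B$a$b * sc - 4 * RicU a b"
    unfolding sc_def RicU_def Ric_def by (rule contraction[OF R1 R2 Bs])
  have "(\<Sum>q\<in>UNIV. \<Sum>c\<in>UNIV. \<Sum>r\<in>UNIV. \<Sum>d\<in>UNIV. R q c r d * EE G a r d b q c)
     = det G * (\<Sum>q\<in>UNIV. \<Sum>c\<in>UNIV. \<Sum>r\<in>UNIV. \<Sum>d\<in>UNIV. R q c r d * det3B B a r d b q c)"
    by (simp add: jacobi[OF BG dBG] sum_distrib_left mult_ac)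
  thus "det G * EU a b = - 1/4 * (\<Sum>q\<in>UNIV. \<Sum>c\<in>UNIV. \<Sum>r\<in>UNIV. \<Sum>d\<in>UNIV. R q c r d * EE G a r d b q c)"
    unfolding C EU by (simp add: algebra_simps)
  have EUd: "EU c d = (\<Sum>x\<in>UNIV. \<Sum>y\<in>UNIV. B$c$x * B$d$y * (Ric x y - 1/2 * sc * G$x$y))" for c d
    unfolding EU_def ..
  define H where "H x y = Ric x y - 1/2 * sc * G$x$y" for x y
  have "(\<Sum>c\<in>UNIV. \<Sum>d\<in>UNIV. G$a$c * G$b$d * EU c d)
      = (\<Sum>c\<in>UNIV. \<Sum>d\<in>UNIV. \<Sum>x\<in>UNIV. \<Sum>y\<in>UNIV. (G$a$c * B$c$x) * ((G$b$d * B$d$y) * H x y))"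
    unfolding EUd H_def by (simp add: sum_distrib_left mult_ac)
  also have "\<dots> = (\<Sum>x\<in>UNIV. \<Sum>y\<in>UNIV. \<Sum>c\<in>UNIV. \<Sum>d\<in>UNIV. (G$a$c * B$c$x) * ((G$b$d * B$d$y) * H x y))"
  proof -
    have "(\<Sum>c\<in>UNIV. \<Sum>d\<in>UNIV. \<Sum>x\<in>UNIV. \<Sum>y\<in>UNIV. (G$a$c * B$c$x) * ((G$b$d * B$d$y) * H x y))
       = (\<Sum>c\<in>UNIV. \<Sum>x\<in>UNIV. \<Sum>d\<in>UNIV. \<Sum>y\<in>UNIV. (G$a$c * B$c$x) * ((G$b$d * B$d$y) * H x y))" by (rule s2)
    also have "\<dots> = (\<Sum>x\<in>UNIV. \<Sum>c\<in>UNIV. \<Sum>d\<in>UNIV. \<Sum>y\<in>UNIV. (G$a$c * B$c$x) * ((G$b$d * B$d$y) * H x y))" by (rule s1)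
    also have "\<dots> = (\<Sum>x\<in>UNIV. \<Sum>c\<in>UNIV. \<Sum>y\<in>UNIV. \<Sum>d\<in>UNIV. (G$a$c * B$c$x) * ((G$b$d * B$d$y) * H x y))" by (rule s3)
    also have "\<dots> = (\<Sum>x\<in>UNIV. \<Sum>y\<in>UNIV. \<Sum>c\<in>UNIV. \<Sum>d\<in>UNIV. (G$a$c * B$c$x) * ((G$b$d * B$d$y) * H x y))" by (rule s2)
    finally show ?thesis .
  qed
  also have "\<dots> = (\<Sum>x\<in>UNIV. \<Sum>y\<in>UNIV. dl a x * (dl b y * H x y))"
    by (simp only: sum_distrib_left[symmetric] sum_distrib_right[symmetric] gb)
  also have "\<dots> = H a b" by (simp add: sum_distrib_left[symmetric])
  finally have fin: "(\<Sum>c\<in>UNIV. \<Sum>d\<in>UNIV. G$a$c * G$b$d * EU c d) = H a b" .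
  have "(\<Sum>c\<in>UNIV. \<Sum>d\<in>UNIV. G$a$c * G$b$d * (det G * EU c d)) = det G * (\<Sum>c\<in>UNIV. \<Sum>d\<in>UNIV. G$a$c * G$b$d * EU c d)"
    by (simp add: sum_distrib_left mult_ac)
  thus "det G * (Ric a b - 1/2 * sc * G$a$b) = (\<Sum>c\<in>UNIV. \<Sum>d\<in>UNIV. G$a$c * G$b$d * (det G * EU c d))"
    unfolding fin H_def by simp
qed


definition dg :: "metric \<Rightarrow> 4 \<Rightarrow> 4 \<Rightarrow> 4 \<Rightarrow> pt \<Rightarrow> real" where
  "dg g m a b p = partial m (\<lambda>q. g q $ a $ b) p"

definition Kf :: "metric \<Rightarrow> 4 \<Rightarrow> 4 \<Rightarrow> 4 \<Rightarrow> pt \<Rightarrow> real" where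
  "Kf g i j l p = 1/2 * (dg g i j l p + dg g j l i p - dg g l i j p)"

lemma axis1_nth: "axis i (1::real) $ j = (if j = i then 1 else 0)"
  by (simp add: axis_def)

lemma mult_ind[simp]: "(x::real) * (if P then 1 else 0) = (if P then x else 0)"
  "(if P then 1 else 0) * (x::real) = (if P then x else 0)" by simp_all

lemma gval_axis: "gval g q (axis j 1) (axis l 1) = g q $ j $ l"
  unfolding gval_def axis1_nth by simp

lemma dir_cf: "dir (coord_field i) f p = partial i f p"
  unfolding dir_def coord_field_def axis1_nth by simp

lemma lie_cf: "lie (coord_field i) (coord_field j) p = 0"
  unfolding lie_def dir_cf by (simp add: coord_field_def partial_const vec_eq_iff)

lemma gval_zero: "gval g p u 0 = 0"
  unfolding gval_def by simp

lemma koszul_cf: "koszul g (coord_field i) (coord_field j) (coord_field l) p = Kf g i j l p"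
  unfolding koszul_def Kf_def dg_def dir_cf lie_cf gval_zero
  by (simp add: coord_field_def gval_axis)

lemma nabla_flat_cf: "nabla_flat g (coord_field a) (coord_field b) p $ j = Kf g a b j p"
  unfolding nabla_flat_def by (simp add: koszul_cf)

lemma smooth_field_cf: "smooth_field U (coord_field c)"
  unfolding smooth_field_def coord_field_def by (simp add: smooth_const)


lemma ld_sum: "finite A \<Longrightarrow> (\<And>a. a \<in> A \<Longrightarrow> ld (f a) x i) \<Longrightarrow> ld (\<lambda>y. \<Sum>a\<in>A. f a y) x i"
proof (induction A rule: finite_induct)
  case empty thus ?case by (simp add: ld_const)
next
  case (insert a A) thus ?case by (simp add: ld_add)
qed

lemma partial_sum: "finite A \<Longrightarrow> (\<And>a. a \<in> A \<Longrightarrow> ld (f a) x i) \<Longrightarrow>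
   partial i (\<lambda>y. \<Sum>a\<in>A. f a y) x = (\<Sum>a\<in>A. partial i (f a) x)"
proof (induction A rule: finite_induct)
  case empty thus ?case by (simp add: partial_const)
next
  case (insert a A)
  have "partial i (\<lambda>y. \<Sum>a\<in>insert a A. f a y) x = partial i (\<lambda>y. f a y + (\<Sum>a\<in>A. f a y)) x"
    using insert(1,2) by simp
  also have "\<dots> = partial i (f a) x + partial i (\<lambda>y. \<Sum>a\<in>A. f a y) x"
    using insert by (intro partial_add ld_sum) auto
  finally show ?case using insert by simp
qed

lemma partial_diff:
  assumes "ld f x i" "ld h x i"
  shows "partial i (\<lambda>y. f y - h y) x = partial i f x - partial i h x"
  using DERIV_diff[OF ld_deriv[OF assms(1)] ld_deriv[OF assms(2)]] unfolding partial_def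
  by (simp add: DERIV_imp_deriv)

lemma smooth_det:
  assumes "open U" "\<And>i j. smooth_on U (\<lambda>p. M p $ i $ j)"
  shows "smooth_on U (\<lambda>p. det (M p :: real^4^4))"
  unfolding det_4 by (intro smooth_add smooth_diff smooth_mult assms)

lemma inv_facts:
  fixes A :: "real^4^4"
  assumes "det A \<noteq> 0"
  shows "A ** matrix_inv A = mat 1" "matrix_inv A ** A = mat 1"
proof -
  have "\<exists>A'. A ** A' = mat 1 \<and> A' ** A = mat 1" using assms invertible_det_nz[of A] invertible_def by blast
  hence "A ** matrix_inv A = mat 1 \<and> matrix_inv A ** A = mat 1"
    unfolding matrix_inv_def by (rule someI_ex)
  thus "A ** matrix_inv A = mat 1" "matrix_inv A ** A = mat 1" by auto
qed

lemma inv_cramer: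
  fixes A :: "real^4^4"
  assumes "det A \<noteq> 0"
  shows "matrix_inv A $ k $ l = det (\<chi> i j. if j = k then axis l 1 $ i else A $ i $ j) / det A"
proof -
  have "A *v (matrix_inv A *v axis l 1) = axis l 1"
    by (simp add: matrix_vector_mul_assoc inv_facts(1)[OF assms])
  hence "matrix_inv A *v axis l 1 = (\<chi> k. det (\<chi> i j. if j = k then axis l 1 $ i else A $ i $ j) / det A)"
    using cramer[OF assms] by blast
  hence "(matrix_inv A *v axis l 1) $ k = det (\<chi> i j. if j = k then axis l 1 $ i else A $ i $ j) / det A"
    by simp
  moreover have "(matrix_inv A *v axis l 1) $ k = matrix_inv A $ k $ l"
    by (simp add: matrix_vector_mult_def axis1_nth)
  ultimately show ?thesis by simp
qed

locale ctx =
  fixes g :: metric and U :: "pt set"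
  assumes U: "open U" and gs: "\<And>a b. smooth_on U (\<lambda>p. g p $ a $ b)"
    and gsym: "\<And>p a b. p \<in> U \<Longrightarrow> g p $ a $ b = g p $ b $ a"
begin

definition N where "N = {p \<in> U. det (g p) \<noteq> 0}"

lemma dg_smooth: "smooth_on U (dg g m a b)"
  unfolding dg_def[abs_def] using smooth_partial[OF gs] by simp

lemma Kf_smooth: "smooth_on U (Kf g i j l)"
  unfolding Kf_def[abs_def]
  by (intro smooth_mult smooth_const smooth_add smooth_diff dg_smooth U)

lemma dg_sym: "p \<in> U \<Longrightarrow> dg g m a b p = dg g m b a p"
  unfolding dg_def by (rule partial_cong[OF U]) (use gsym in auto)

lemma Kf_pair: "p \<in> U \<Longrightarrow> Kf g n s q p + Kf g n q s p = dg g n s q p"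
  unfolding Kf_def using dg_sym[of p] by (simp add: algebra_simps)

lemma det_smooth: "smooth_on U (\<lambda>p. det (g p))"
  by (rule smooth_det[OF U gs])

lemma N_open: "open N"
proof -
  have "continuous_on U (\<lambda>p. det (g p))" using smooth_cont[OF det_smooth] .
  hence "open (U \<inter> (\<lambda>p. det (g p)) -` (- {0}))"
    by (intro continuous_open_preimage U) auto
  moreover have "U \<inter> (\<lambda>p. det (g p)) -` (- {0}) = N" unfolding N_def by auto
  ultimately show ?thesis by simp
qed

lemma N_sub: "N \<subseteq> U" unfolding N_def by auto

definition Cnum where "Cnum k l p = det (\<chi> i j. if j = k then axis l 1 $ i else g p $ i $ j)"

lemma Cnum_smooth: "smooth_on U (Cnum k l)"
  unfolding Cnum_def[abs_def]
proof (rule smooth_det[OF U])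
  fix i j
  show "smooth_on U (\<lambda>p. (\<chi> i j. if j = k then axis l 1 $ i else g p $ i $ j) $ i $ j)"
    by (cases "j = k") (simp_all add: smooth_const gs)
qed

lemma ginv_cramer: "p \<in> N \<Longrightarrow> ginv g p $ k $ l = Cnum k l p / det (g p)"
  unfolding ginv_def Cnum_def N_def using inv_cramer by auto

lemma ginv_ld: "p \<in> N \<Longrightarrow> ld (\<lambda>q. ginv g q $ k $ l) p m"
proof -
  assume p: "p \<in> N"
  have "ld (\<lambda>q. Cnum k l q / det (g q)) p m"
    unfolding ld_def
  proof (rule differentiable_divide)
    show "(\<lambda>t. Cnum k l (p + t *\<^sub>R axis m 1)) differentiable at 0"
      using smooth_ld[OF Cnum_smooth] p N_sub unfolding ld_def by blast
    show "(\<lambda>t. det (g (p + t *\<^sub>R axis m 1))) differentiable at 0"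
      using smooth_ld[OF det_smooth] p N_sub unfolding ld_def by blast
    show "det (g (p + 0 *\<^sub>R axis m 1)) \<noteq> 0" using p by (simp add: N_def)
  qed
  moreover have "ld (\<lambda>q. ginv g q $ k $ l) p m = ld (\<lambda>q. Cnum k l q / det (g q)) p m"
    by (rule ld_cong[OF N_open p]) (simp add: ginv_cramer)
  ultimately show ?thesis by simp
qed

lemma g_ld: "p \<in> U \<Longrightarrow> ld (\<lambda>q. g q $ a $ b) p m"
  using smooth_ld[OF gs] by blast

lemma gB: "p \<in> N \<Longrightarrow> (\<Sum>k\<in>UNIV. g p $ i $ k * ginv g p $ k $ j) = dl i j"
  using inv_facts(1)[of "g p"] unfolding N_def ginv_def
  by (auto simp: matrix_matrix_mult_def mat_def dl_def vec_eq_iff dest!: arg_cong[where f="\<lambda>M. M$i$j"])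

lemma Bg: "p \<in> N \<Longrightarrow> (\<Sum>k\<in>UNIV. ginv g p $ i $ k * g p $ k $ j) = dl i j"
  using inv_facts(2)[of "g p"] unfolding N_def ginv_def
  by (auto simp: matrix_matrix_mult_def mat_def dl_def vec_eq_iff dest!: arg_cong[where f="\<lambda>M. M$i$j"])

lemma dginv: "p \<in> N \<Longrightarrow> partial m (\<lambda>q. ginv g q $ r $ l) p =
   - (\<Sum>i\<in>UNIV. \<Sum>k\<in>UNIV. ginv g p $ r $ i * dg g m i k p * ginv g p $ k $ l)"
proof -
  assume p: "p \<in> N"
  have pU: "p \<in> U" using p N_sub by auto
  define dB where "dB k = partial m (\<lambda>q. ginv g q $ k $ l) p" for k
  have z: "(\<Sum>k\<in>UNIV. dg g m i k p * ginv g p $ k $ l + g p $ i $ k * dB k) = 0" for i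
  proof -
    have "partial m (\<lambda>q. \<Sum>k\<in>UNIV. g q $ i $ k * ginv g q $ k $ l) p = partial m (\<lambda>q. dl i l) p"
      by (rule partial_cong[OF N_open p]) (simp add: gB)
    also have "\<dots> = 0" by (rule partial_const)
    finally have "partial m (\<lambda>q. \<Sum>k\<in>UNIV. g q $ i $ k * ginv g q $ k $ l) p = 0" .
    moreover have "partial m (\<lambda>q. \<Sum>k\<in>UNIV. g q $ i $ k * ginv g q $ k $ l) p
       = (\<Sum>k\<in>UNIV. partial m (\<lambda>q. g q $ i $ k * ginv g q $ k $ l) p)"
      by (rule partial_sum) (auto intro: ld_mult g_ld[OF pU] ginv_ld[OF p])
    moreover have "partial m (\<lambda>q. g q $ i $ k * ginv g q $ k $ l) p = dg g m i k p * ginv g p $ k $ l + g p $ i $ k * dB k" for k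
      unfolding dg_def dB_def by (rule partial_mult[OF g_ld[OF pU] ginv_ld[OF p]])
    ultimately show ?thesis by simp
  qed
  hence z': "(\<Sum>k\<in>UNIV. g p $ i $ k * dB k) = - (\<Sum>k\<in>UNIV. dg g m i k p * ginv g p $ k $ l)" for i
    by (simp add: sum.distrib eq_neg_iff_add_eq_0 add.commute)
  have "dB r = (\<Sum>k\<in>UNIV. dl r k * dB k)" by simp
  also have "\<dots> = (\<Sum>k\<in>UNIV. \<Sum>i\<in>UNIV. ginv g p $ r $ i * g p $ i $ k * dB k)"
    by (simp add: Bg[OF p, symmetric] sum_distrib_right)
  also have "\<dots> = (\<Sum>i\<in>UNIV. \<Sum>k\<in>UNIV. ginv g p $ r $ i * g p $ i $ k * dB k)" by (rule sum.swap)
  also have "\<dots> = (\<Sum>i\<in>UNIV. ginv g p $ r $ i * (\<Sum>k\<in>UNIV. g p $ i $ k * dB k))"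
    by (simp add: sum_distrib_left mult.assoc)
  also have "\<dots> = - (\<Sum>i\<in>UNIV. \<Sum>k\<in>UNIV. ginv g p $ r $ i * dg g m i k p * ginv g p $ k $ l)"
    unfolding z' by (simp add: sum_distrib_left sum_negf mult.assoc)
  finally show ?thesis unfolding dB_def .
qed

end


lemma Q1: "(\<Sum>a\<in>UNIV. \<Sum>b\<in>UNIV. \<Sum>c\<in>UNIV. (F a b c :: real)) = (\<Sum>b\<in>UNIV. \<Sum>c\<in>UNIV. \<Sum>a\<in>UNIV. F a b c)"
proof -
  have "(\<Sum>a\<in>UNIV. \<Sum>b\<in>UNIV. \<Sum>c\<in>UNIV. (F a b c :: real)) = (\<Sum>b\<in>UNIV. \<Sum>a\<in>UNIV. \<Sum>c\<in>UNIV. F a b c)" by (rule sum.swap)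
  also have "\<dots> = (\<Sum>b\<in>UNIV. \<Sum>c\<in>UNIV. \<Sum>a\<in>UNIV. F a b c)" by (rule sum.cong[OF refl], rule sum.swap)
  finally show ?thesis .
qed

lemma Q2: "(\<Sum>a\<in>UNIV. \<Sum>b\<in>UNIV. \<Sum>c\<in>UNIV. (F a b c :: real)) = (\<Sum>c\<in>UNIV. \<Sum>b\<in>UNIV. \<Sum>a\<in>UNIV. F a b c)"
proof -
  have "(\<Sum>a\<in>UNIV. \<Sum>b\<in>UNIV. \<Sum>c\<in>UNIV. (F a b c :: real)) = (\<Sum>b\<in>UNIV. \<Sum>c\<in>UNIV. \<Sum>a\<in>UNIV. F a b c)" by (rule Q1)
  also have "\<dots> = (\<Sum>c\<in>UNIV. \<Sum>b\<in>UNIV. \<Sum>a\<in>UNIV. F a b c)" by (rule sum.swap)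
  finally show ?thesis .
qed

lemma Q3: "(\<Sum>a\<in>UNIV. \<Sum>b\<in>UNIV. \<Sum>c\<in>UNIV. (F a b c :: real)) = (\<Sum>c\<in>UNIV. \<Sum>a\<in>UNIV. \<Sum>b\<in>UNIV. F a b c)"
proof -
  have "(\<Sum>a\<in>UNIV. \<Sum>b\<in>UNIV. \<Sum>c\<in>UNIV. (F a b c :: real)) = (\<Sum>a\<in>UNIV. \<Sum>c\<in>UNIV. \<Sum>b\<in>UNIV. F a b c)" by (rule sum.cong[OF refl], rule sum.swap)
  also have "\<dots> = (\<Sum>c\<in>UNIV. \<Sum>a\<in>UNIV. \<Sum>b\<in>UNIV. F a b c)" by (rule sum.swap)
  finally show ?thesis .
qed

context ctx begin

lemma christoffel_eq: "p \<in> U \<Longrightarrow> christoffel g p k i j = (\<Sum>l\<in>UNIV. ginv g p $ k $ l * Kf g i j l p)"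
  unfolding christoffel_def Kf_def
  using dg_sym[of p j] unfolding dg_def by (simp add: sum_distrib_left mult_ac)

lemma Kf_ld: "p \<in> U \<Longrightarrow> ld (Kf g i j l) p m"
  using smooth_ld[OF Kf_smooth] by blast

lemma dGamma: "p \<in> N \<Longrightarrow> partial m (\<lambda>q. christoffel g q r n s) p =
  (\<Sum>l\<in>UNIV. partial m (\<lambda>q. ginv g q $ r $ l) p * Kf g n s l p + ginv g p $ r $ l * partial m (Kf g n s l) p)"
proof -
  assume p: "p \<in> N"
  have pU: "p \<in> U" using p N_sub by auto
  have "partial m (\<lambda>q. christoffel g q r n s) p = partial m (\<lambda>q. \<Sum>l\<in>UNIV. ginv g q $ r $ l * Kf g n s l q) p"
    by (rule partial_cong[OF N_open p]) (use N_sub christoffel_eq in auto)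
  also have "\<dots> = (\<Sum>l\<in>UNIV. partial m (\<lambda>q. ginv g q $ r $ l * Kf g n s l q) p)"
    by (rule partial_sum) (auto intro: ld_mult ginv_ld[OF p] Kf_ld[OF pU])
  also have "\<dots> = (\<Sum>l\<in>UNIV. partial m (\<lambda>q. ginv g q $ r $ l) p * Kf g n s l p + ginv g p $ r $ l * partial m (Kf g n s l) p)"
    by (rule sum.cong[OF refl], rule partial_mult[OF ginv_ld[OF p] Kf_ld[OF pU]])
  finally show ?thesis .
qed

definition Sx where "Sx c a b j p = partial c (Kf g a b j) p -
   (\<Sum>u\<in>UNIV. \<Sum>v\<in>UNIV. ginv g p $ u $ v * Kf g c j u p * Kf g a b v p)"

lemma Y_lemma: "p \<in> N \<Longrightarrow> partial m (\<lambda>q. christoffel g q r n s) p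
   + (\<Sum>l\<in>UNIV. christoffel g p r m l * christoffel g p l n s)
   = (\<Sum>q\<in>UNIV. ginv g p $ r $ q * Sx m n s q p)"
proof -
  assume p: "p \<in> N"
  have pU: "p \<in> U" using p N_sub by auto
  define B where "B = ginv g p"
  define K where "K i j l = Kf g i j l p" for i j l
  define dK where "dK i j l = partial m (Kf g n s l) p" for i j l
  have dgK: "dg g m i k p = K m i k + K m k i" for i k
    unfolding K_def using Kf_pair[OF pU, of m i k] by simp
  define A where "A = (\<Sum>l\<in>UNIV. \<Sum>i\<in>UNIV. \<Sum>k\<in>UNIV. B$r$i * K m i k * B$k$l * K n s l)"
  define Bt where "Bt = (\<Sum>l\<in>UNIV. \<Sum>i\<in>UNIV. \<Sum>k\<in>UNIV. B$r$i * K m k i * B$k$l * K n s l)"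
  define C where "C = (\<Sum>l\<in>UNIV. (\<Sum>a\<in>UNIV. B$r$a * K m l a) * (\<Sum>b\<in>UNIV. B$l$b * K n s b))"
  have L1: "partial m (\<lambda>q. christoffel g q r n s) p = (\<Sum>l\<in>UNIV. B$r$l * partial m (Kf g n s l) p) - A - Bt"
  proof -
    have "partial m (\<lambda>q. christoffel g q r n s) p =
       (\<Sum>l\<in>UNIV. (- (\<Sum>i\<in>UNIV. \<Sum>k\<in>UNIV. B$r$i * (K m i k + K m k i) * B$k$l)) * K n s l + B$r$l * partial m (Kf g n s l) p)"
      unfolding dGamma[OF p] dginv[OF p] dgK B_def K_def ..
    also have "\<dots> = (\<Sum>l\<in>UNIV. B$r$l * partial m (Kf g n s l) p) - A - Bt"
      unfolding A_def Bt_def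
      by (simp add: sum.distrib sum_subtractf sum_distrib_right sum_distrib_left algebra_simps sum_negf)
    finally show ?thesis .
  qed
  have L2: "(\<Sum>l\<in>UNIV. christoffel g p r m l * christoffel g p l n s) = C"
    unfolding C_def christoffel_eq[OF pU] B_def K_def ..
  have BtC: "Bt = C"
  proof -
    have "C = (\<Sum>l\<in>UNIV. \<Sum>b\<in>UNIV. \<Sum>a\<in>UNIV. B$r$a * K m l a * B$l$b * K n s b)"
      unfolding C_def by (simp add: sum_distrib_left sum_distrib_right mult_ac)
    also have "\<dots> = (\<Sum>a\<in>UNIV. \<Sum>l\<in>UNIV. \<Sum>b\<in>UNIV. B$r$a * K m l a * B$l$b * K n s b)" by (rule Q3)
    also have "\<dots> = Bt" unfolding Bt_def by (rule Q1[symmetric])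
    finally show ?thesis ..
  qed
  have AS: "A = (\<Sum>q\<in>UNIV. B$r$q * (\<Sum>u\<in>UNIV. \<Sum>v\<in>UNIV. B$u$v * K m q u * K n s v))"
  proof -
    have "A = (\<Sum>i\<in>UNIV. \<Sum>k\<in>UNIV. \<Sum>l\<in>UNIV. B$r$i * K m i k * B$k$l * K n s l)"
      unfolding A_def by (rule Q1)
    thus ?thesis by (simp add: sum_distrib_left mult_ac)
  qed
  show ?thesis
    unfolding L1 L2 BtC Sx_def AS
    by (simp add: B_def K_def right_diff_distrib sum_subtractf)
qed

end


context ctx begin

definition Rlx where "Rlx q s m n p = Sx m n s q p - Sx n m s q p"

lemma riemann_eq: "p \<in> N \<Longrightarrow> riemann g p r s m n = (\<Sum>q\<in>UNIV. ginv g p $ r $ q * Rlx q s m n p)"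
proof -
  assume p: "p \<in> N"
  have "riemann g p r s m n =
     (partial m (\<lambda>q. christoffel g q r n s) p + (\<Sum>l\<in>UNIV. christoffel g p r m l * christoffel g p l n s))
   - (partial n (\<lambda>q. christoffel g q r m s) p + (\<Sum>l\<in>UNIV. christoffel g p r n l * christoffel g p l m s))"
    unfolding riemann_def by (simp add: sum_subtractf algebra_simps)
  also have "\<dots> = (\<Sum>q\<in>UNIV. ginv g p $ r $ q * Rlx q s m n p)"
    unfolding Y_lemma[OF p] Rlx_def by (simp add: right_diff_distrib sum_subtractf)
  finally show ?thesis .
qed

lemma G_sym_mat: "p \<in> U \<Longrightarrow> transpose (g p) = g p"
  using gsym by (simp add: vec_eq_iff transpose_def)

lemma ginv_sym: "p \<in> N \<Longrightarrow> ginv g p $ i $ j = ginv g p $ j $ i"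
proof -
  assume p: "p \<in> N"
  hence pU: "p \<in> U" and d: "det (g p) \<noteq> 0" using N_sub N_def by auto
  define G where "G = g p"
  define B where "B = ginv g p"
  have GB: "G ** B = mat 1" and BG: "B ** G = mat 1" using inv_facts[OF d] unfolding G_def B_def ginv_def by auto
  have "transpose B ** G = mat 1"
  proof -
    have "transpose B ** G = transpose (transpose G ** B)" by (simp add: matrix_transpose_mul)
    also have "\<dots> = mat 1" using G_sym_mat[OF pU] GB unfolding G_def by (simp add: transpose_mat)
    finally show ?thesis .
  qed
  hence "transpose B = B"
  proof -
    assume tb: "transpose B ** G = mat 1"
    have "transpose B = transpose B ** (G ** B)" by (simp only: GB matrix_mul_rid)
    also have "\<dots> = (transpose B ** G) ** B" by (rule matrix_mul_assoc)
    also have "\<dots> = B" by (simp only: tb matrix_mul_lid)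
    finally show ?thesis .
  qed
  moreover have "transpose B $ i $ j = B $ j $ i" by (simp add: transpose_def)
  ultimately show ?thesis unfolding B_def by simp
qed

lemma flat_eq: "p \<in> U \<Longrightarrow> flat g p u = g p *v u"
  unfolding flat_def matrix_vector_mult_def using gsym by (simp add: vec_eq_iff mult.commute)

lemma innerb_eq: "p \<in> N \<Longrightarrow> innerb g p \<alpha> \<beta> = (\<Sum>u\<in>UNIV. \<Sum>v\<in>UNIV. ginv g p $ u $ v * \<alpha> $ u * \<beta> $ v)"
proof -
  assume p: "p \<in> N"
  hence pU: "p \<in> U" and d: "det (g p) \<noteq> 0" using N_sub N_def by auto
  define G where "G = g p"
  define B where "B = ginv g p"
  have GB: "G ** B = mat 1" and BG: "B ** G = mat 1" using inv_facts[OF d] unfolding G_def B_def ginv_def by auto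
  have ex: "\<exists>u. flat g p u = \<gamma>" for \<gamma>
    by (rule exI[of _ "B *v \<gamma>"]) (simp add: flat_eq[OF pU] G_def[symmetric] matrix_vector_mul_assoc GB)
  define u where "u = (SOME u. flat g p u = \<alpha>)"
  define v where "v = (SOME v. flat g p v = \<beta>)"
  have fu: "G *v u = \<alpha>" using someI_ex[OF ex[of \<alpha>]] unfolding u_def flat_eq[OF pU] G_def .
  have fv: "G *v v = \<beta>" using someI_ex[OF ex[of \<beta>]] unfolding v_def flat_eq[OF pU] G_def .
  have vB: "v = B *v \<beta>" unfolding fv[symmetric] by (simp add: matrix_vector_mul_assoc BG)
  have "innerb g p \<alpha> \<beta> = (\<Sum>a\<in>UNIV. \<Sum>b\<in>UNIV. G $ a $ b * u $ a * v $ b)"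
    unfolding innerb_def gval_def u_def v_def G_def ..
  also have "\<dots> = (\<Sum>b\<in>UNIV. \<Sum>a\<in>UNIV. G $ a $ b * u $ a * v $ b)" by (rule sum.swap)
  also have "\<dots> = (\<Sum>b\<in>UNIV. (\<Sum>a\<in>UNIV. u $ a * G $ a $ b) * v $ b)"
    by (simp add: sum_distrib_right sum_distrib_left mult_ac)
  also have "\<dots> = (\<Sum>b\<in>UNIV. \<alpha> $ b * v $ b)"
    using someI_ex[OF ex[of \<alpha>]] unfolding u_def[symmetric] G_def by (simp add: flat_def vec_eq_iff)
  also have "\<dots> = (\<Sum>b\<in>UNIV. \<Sum>c\<in>UNIV. B $ b $ c * \<alpha> $ b * \<beta> $ c)"
    unfolding vB by (simp add: matrix_vector_mult_def sum_distrib_left mult_ac)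
  finally show ?thesis unfolding B_def .
qed

lemma cov_deriv_eq: "p \<in> N \<Longrightarrow>
  cov_deriv g (coord_field c) (nabla_flat g (coord_field a) (coord_field b)) p $ j = Sx c a b j p"
proof -
  assume p: "p \<in> N"
  have e: "(\<lambda>q. nabla_flat g (coord_field a) (coord_field b) q $ j) = Kf g a b j"
    by (simp add: nabla_flat_cf fun_eq_iff)
  show ?thesis unfolding cov_deriv_def Sx_def
    by (simp add: e dir_cf innerb_eq[OF p] nabla_flat_cf)
qed

lemma dg_ld: "p \<in> U \<Longrightarrow> ld (dg g n s q) p m"
  using smooth_ld[OF dg_smooth] by blast

lemma dKpair: "p \<in> U \<Longrightarrow> partial m (Kf g n s q) p + partial m (Kf g n q s) p = partial m (partial n (\<lambda>x. g x $ s $ q)) p"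
proof -
  assume pU: "p \<in> U"
  have "partial m (Kf g n s q) p + partial m (Kf g n q s) p = partial m (\<lambda>x. Kf g n s q x + Kf g n q s x) p"
    by (rule partial_add[symmetric]) (use Kf_ld[OF pU] in auto)
  also have "\<dots> = partial m (dg g n s q) p"
    by (rule partial_cong[OF U pU]) (simp add: Kf_pair)
  finally show ?thesis unfolding dg_def[abs_def] .
qed

definition Qx where "Qx c j a b p = (\<Sum>u\<in>UNIV. \<Sum>v\<in>UNIV. ginv g p $ u $ v * Kf g c j u p * Kf g a b v p)"

lemma Qx_sym: "p \<in> N \<Longrightarrow> Qx c j a b p = Qx a b c j p"
proof -
  assume p: "p \<in> N"
  have "Qx c j a b p = (\<Sum>v\<in>UNIV. \<Sum>u\<in>UNIV. ginv g p $ u $ v * Kf g c j u p * Kf g a b v p)"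
    unfolding Qx_def by (rule sum.swap)
  also have "\<dots> = Qx a b c j p" unfolding Qx_def using ginv_sym[OF p] by (simp add: mult_ac)
  finally show ?thesis .
qed

lemma Sx_Qx: "Sx c a b j p = partial c (Kf g a b j) p - Qx c j a b p"
  unfolding Sx_def Qx_def ..

lemma Rlx_anti1: "p \<in> N \<Longrightarrow> Rlx q s m n p = - Rlx s q m n p"
proof -
  assume p: "p \<in> N"
  hence pU: "p \<in> U" using N_sub by auto
  have sw: "partial m (partial n (\<lambda>x. g x $ s $ q)) p = partial n (partial m (\<lambda>x. g x $ s $ q)) p"
    by (rule schwarz[OF U gs pU])
  have "Rlx q s m n p + Rlx s q m n p =
     (partial m (Kf g n s q) p + partial m (Kf g n q s) p) - (partial n (Kf g m s q) p + partial n (Kf g m q s) p)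
     - (Qx m q n s p + Qx m s n q p) + (Qx n q m s p + Qx n s m q p)"
    unfolding Rlx_def Sx_Qx by (simp add: algebra_simps)
  also have "\<dots> = 0" unfolding dKpair[OF pU] sw
    using Qx_sym[OF p, of m q n s] Qx_sym[OF p, of m s n q] by simp
  finally show ?thesis by simp
qed

lemma Rlx_anti2: "Rlx q s m n p = - Rlx q s n m p"
  unfolding Rlx_def by simp

end


context ctx begin

lemma einstein_pt:
  assumes p: "p \<in> N"
  shows "det (g p) * einstein_up g p a b = - 1/4 * (\<Sum>q\<in>UNIV. \<Sum>c\<in>UNIV. \<Sum>r\<in>UNIV. \<Sum>d\<in>UNIV. Rlx q c r d p * EE (g p) a r d b q c)"
    and "det (g p) * einstein g p a b = (\<Sum>c\<in>UNIV. \<Sum>d\<in>UNIV. g p $ a $ c * g p $ b $ d * (det (g p) * einstein_up g p c d))"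
proof -
  have pU: "p \<in> U" and d: "det (g p) \<noteq> 0" using p N_sub N_def by auto
  have GB: "g p ** ginv g p = mat 1" and BG: "ginv g p ** g p = mat 1" using inv_facts[OF d] unfolding ginv_def by auto
  have ric: "ricci g p s n = (\<Sum>r\<in>UNIV. \<Sum>q\<in>UNIV. ginv g p $ r $ q * Rlx q s r n p)" for s n
    unfolding ricci_def riemann_eq[OF p] ..
  have eu: "einstein_up g p a b = (\<Sum>c\<in>UNIV. \<Sum>d\<in>UNIV. ginv g p $ a $ c * ginv g p $ b $ d *
     ((\<Sum>r\<in>UNIV. \<Sum>q\<in>UNIV. ginv g p $ r $ q * Rlx q c r d p) - 1/2 *
      (\<Sum>s\<in>UNIV. \<Sum>n\<in>UNIV. ginv g p $ s $ n * (\<Sum>r\<in>UNIV. \<Sum>q\<in>UNIV. ginv g p $ r $ q * Rlx q s r n p)) * g p $ c $ d))"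
    for a b unfolding einstein_up_def einstein_def scalar_curv_def ric ..
  have ei: "einstein g p a b = (\<Sum>r\<in>UNIV. \<Sum>q\<in>UNIV. ginv g p $ r $ q * Rlx q a r b p) - 1/2 *
      (\<Sum>s\<in>UNIV. \<Sum>n\<in>UNIV. ginv g p $ s $ n * (\<Sum>r\<in>UNIV. \<Sum>q\<in>UNIV. ginv g p $ r $ q * Rlx q s r n p)) * g p $ a $ b"
    unfolding einstein_def scalar_curv_def ric ..
  note F = einstein_formula[OF BG GB, of "\<lambda>q c r d. Rlx q c r d p"]
  have R1: "\<And>q c r d. Rlx q c r d p = - Rlx c q r d p" using Rlx_anti1[OF p] .
  have R2: "\<And>q c r d. Rlx q c r d p = - Rlx q c d r p" using Rlx_anti2 .
  have Bs: "\<And>i j. ginv g p $ i $ j = ginv g p $ j $ i" using ginv_sym[OF p] .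
  have Gs: "\<And>i j. g p $ i $ j = g p $ j $ i" using gsym[OF pU] .
  show "det (g p) * einstein_up g p a b = - 1/4 * (\<Sum>q\<in>UNIV. \<Sum>c\<in>UNIV. \<Sum>r\<in>UNIV. \<Sum>d\<in>UNIV. Rlx q c r d p * EE (g p) a r d b q c)"
    unfolding eu using F(1)[OF R1 R2 Bs Gs] .
  show "det (g p) * einstein g p a b = (\<Sum>c\<in>UNIV. \<Sum>d\<in>UNIV. g p $ a $ c * g p $ b $ d * (det (g p) * einstein_up g p c d))"
    unfolding eu ei using F(2)[OF R1 R2 Bs Gs] .
qed

lemma EE_smooth: "smooth_on U (\<lambda>p. EE (g p) a r d b q c)"
  unfolding EE_def by (intro smooth_sum smooth_mult smooth_const gs U)

end

theorem theorem10p2: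
  fixes g :: "real^4 \<Rightarrow> real^4^4" and U :: "(real^4) set"
  assumes "semi_regular_spacetime g U"
  shows "(\<exists>F :: real^4 \<Rightarrow> 4 \<Rightarrow> 4 \<Rightarrow> real.
            (\<forall>a b. smooth_on U (\<lambda>p. F p a b)) \<and>
            (\<forall>p\<in>U. det (g p) \<noteq> 0 \<longrightarrow> (\<forall>a b. F p a b = einstein g p a b * det (g p))))
       \<and> (\<exists>F :: real^4 \<Rightarrow> 4 \<Rightarrow> 4 \<Rightarrow> real.
            (\<forall>a b. smooth_on U (\<lambda>p. F p a b)) \<and>
            (\<forall>p\<in>U. det (g p) \<noteq> 0 \<longrightarrow> (\<forall>a b. F p a b = einstein_up g p a b * det (g p))))"
proof -
  have ssr: "singular_semi_riemannian g U" and sr: "semi_regular g U"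
    using assms unfolding semi_regular_spacetime_def by auto
  interpret ctx g U using ssr unfolding singular_semi_riemannian_def by unfold_locales auto
  define S' where "S' c a b j p = cov_deriv g (coord_field c) (nabla_flat g (coord_field a) (coord_field b)) p $ j" for c a b j p
  have S'_smooth: "smooth_on U (S' c a b j)" for c a b j
  proof -
    have "in_Abullet g U (cov_deriv g (coord_field c) (nabla_flat g (coord_field a) (coord_field b)))"
      using sr smooth_field_cf unfolding semi_regular_def by blast
    thus ?thesis unfolding in_Abullet_def smooth_field_def S'_def[abs_def] by blast
  qed
  define Rs where "Rs q s m n p = S' m n s q p - S' n m s q p" for q s m n p
  have Rs_smooth: "smooth_on U (Rs q s m n)" for q s m n
    unfolding Rs_def[abs_def] by (intro smooth_diff U S'_smooth)
  have Rs_eq: "p \<in> N \<Longrightarrow> Rs q s m n p = Rlx q s m n p" for q s m n p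
    unfolding Rs_def Rlx_def S'_def by (simp add: cov_deriv_eq)
  define F1 where "F1 p a b = - 1/4 * (\<Sum>q\<in>UNIV. \<Sum>c\<in>UNIV. \<Sum>r\<in>UNIV. \<Sum>d\<in>UNIV. Rs q c r d p * EE (g p) a r d b q c)" for p a b
  define F2 where "F2 p a b = (\<Sum>c\<in>UNIV. \<Sum>d\<in>UNIV. g p $ a $ c * g p $ b $ d * F1 p c d)" for p a b
  have F1s: "smooth_on U (\<lambda>p. F1 p a b)" for a b
    unfolding F1_def by (intro smooth_mult smooth_const smooth_sum Rs_smooth EE_smooth U)
  have F2s: "smooth_on U (\<lambda>p. F2 p a b)" for a b
    unfolding F2_def by (intro smooth_mult smooth_sum F1s gs U)
  have F1e: "F1 p a b = einstein_up g p a b * det (g p)" if "p \<in> U" "det (g p) \<noteq> 0" for p a b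
  proof -
    have p: "p \<in> N" using that N_def by auto
    show ?thesis unfolding F1_def Rs_eq[OF p] using einstein_pt(1)[OF p, of a b] by (simp add: mult.commute)
  qed
  have F2e: "F2 p a b = einstein g p a b * det (g p)" if "p \<in> U" "det (g p) \<noteq> 0" for p a b
  proof -
    have p: "p \<in> N" using that N_def by auto
    show ?thesis unfolding F2_def using einstein_pt(2)[OF p, of a b] F1e[OF that] by (simp add: mult.commute)
  qed
  show ?thesis
    by (intro conjI exI[of _ F2] exI[of _ F1]) (use F1s F2s F1e F2e in auto)
qed


end
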